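(* Let $\tilde\Psi_\mu$, $G_{\mathbf x}$, $D_{\mathbf x}$, $\mathrm{SINR}^n_\mu$, $h$, $R$, $d$, $a$, $\lambda$, $\eta$, $m$, $P$, $\sigma_n^2$ be as in the context, and let $\beta\ge 1$. Then the success probability at the hovering location satisfies $$P^s_\mu=\mathbb P\Big(\bigcup_{\mathbf x_n\in\tilde\Psi_\mu}\{\mathrm{SINR}^n_\mu\ge\beta\}\Big)=\mathbb E\Big\{\sum_{\mathbf x_n\in\tilde\Psi_\mu}\mathbb 1_{\{\mathrm{SINR}^n_\mu\ge\beta\}}\Big\} =2a\pi\lambda\int_h^d\sum_{k=0}^{m-1}\frac{(-m\beta r^\eta)^k}{k!}\Big[\frac{\partial^k}{\partial s^k}\mathcal L_I(s)\Big]_{s=m\beta r^\eta}\, r\,dr,$$ where $\mathcal L_I(s)=\mathbb E[e^{-sI}]$ is the Laplace transform of the normalized interference-plus-noise $I=\sum_{\mathbf x\in\tilde\Psi_\mu\setminus\{\mathbf x_n\}}G_{\mathbf x}D_{\mathbf x}^{-\eta}+\sigma_n^2/P$ seen by a typical transmitting node, given by $$\mathcal L_I(s)=e^{-s\sigma_n^2/P}\exp\Big(-2\pi\lambda a\int_h^d\Big(1-\big(1+\tfrac{s r^{-\eta}}{m}\big)^{-m}\Big)r\,dr\Big).$$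
   Context: IoT nodes on the ground plane form a homogeneous Poisson point process $\Psi$ of intensity $\lambda>0$. A UAV hovers at altitude $h>0$ directly above the center $c_\mu$ of a disk $\mathcal A_\mu$ of radius $R>0$ on the ground; set $d=\sqrt{h^2+R^2}$. For a ground node at $\mathbf x$, $D_{\mathbf x}=\sqrt{\|\mathbf x-c_\mu\|^2+h^2}$ is its distance to the UAV (so for a uniform point in $\mathcal A_\mu$, $D$ has density $2r/R^2$ on $[h,d]$). Each node in $\mathcal A_\mu$ transmits independently with (ALOHA) probability $a\in(0,1]$, so the set of simultaneous transmitters $\tilde\Psi_\mu$ is a Poisson point process of intensity $a\lambda\mathbb 1_{\{\mathbf x\in\mathcal A_\mu\}}$. All nodes transmit with power $P>0$; the noise variance is $\sigma_n^2>0$; path loss is $D^{-\eta}$ with $\eta>2$. Each link has an i.i.d. power gain $G_{\mathbf x}$ (independent of the point process) with Gamma density $f_G(g)=\frac{m^m g^{m-1}}{\Gamma(m)}e^{-mg}$, $g>0$, where $m$ is a positive integer (Nakagami-$m$ fading). For $\mathbf x_n\in\tilde\Psi_\mu$, $\mathrm{SINR}^n_\mu=\dfrac{P G_{\mathbf x_n}D_{\mathbf x_n}^{-\eta}}{\sum_{\mathbf x\in\tilde\Psi_\mu\setminus\{\mathbf x_n\}}P G_{\mathbf x}D_{\mathbf x}^{-\eta}+\sigma_n^2}$. $\frac{\partial^k}{\partial s^k}$ denotes the $k$-th derivative in $s$. *)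

theory Defs
  imports "HOL-Probability.Probability"
begin

text \<open>A transmitter configuration with n points is a function
  nat \<Rightarrow> (real \<times> real) \<times> real on indices {..<n}: ground position and
  fading power gain of each transmitting node.\<close>

definition nakagami_density :: "nat \<Rightarrow> real \<Rightarrow> real" where
  "nakagami_density m g =
     (if g > 0 then real m ^ m * g ^ (m - 1) / Gamma (real m) * exp (- real m * g) else 0)"

definition gain_dist :: "nat \<Rightarrow> real measure" where
  "gain_dist m = density lborel (\<lambda>g. ennreal (nakagami_density m g))"

definition mark_dist :: "real \<times> real \<Rightarrow> real \<Rightarrow> nat \<Rightarrow> ((real \<times> real) \<times> real) measure" where
  "mark_dist c R m = uniform_measure lborel (cball c R) \<Otimes>\<^sub>M gain_dist m"

definition config_dist :: "real \<times> real \<Rightarrow> real \<Rightarrow> nat \<Rightarrow> nat \<Rightarrow> (nat \<Rightarrow> (real \<times> real) \<times> real) measure" where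
  "config_dist c R m n = PiM {..<n} (\<lambda>_. mark_dist c R m)"

text \<open>Expectation of a functional F of the marked Poisson point process of intensity
  a*lam on the disk cball c R (i.i.d. Nakagami-m gains): the number of points is
  Poisson with mean a*lam*pi*R^2 and, given n points, they are i.i.d. uniform on the disk.\<close>
definition ppp_expect ::
  "real \<Rightarrow> real \<Rightarrow> real \<times> real \<Rightarrow> real \<Rightarrow> nat \<Rightarrow>
   (nat \<Rightarrow> (nat \<Rightarrow> (real \<times> real) \<times> real) \<Rightarrow> real) \<Rightarrow> real" where
  "ppp_expect a lam c R m F =
     (let \<Lambda> = a * lam * pi * R\<^sup>2 in
      \<Sum>n. exp (- \<Lambda>) * \<Lambda> ^ n / fact n * integral\<^sup>L (config_dist c R m n) (F n))"

definition ppp_prob ::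
  "real \<Rightarrow> real \<Rightarrow> real \<times> real \<Rightarrow> real \<Rightarrow> nat \<Rightarrow>
   (nat \<Rightarrow> (nat \<Rightarrow> (real \<times> real) \<times> real) \<Rightarrow> bool) \<Rightarrow> real" where
  "ppp_prob a lam c R m E =
     (let \<Lambda> = a * lam * pi * R\<^sup>2 in
      \<Sum>n. exp (- \<Lambda>) * \<Lambda> ^ n / fact n *
           measure (config_dist c R m n) {\<omega> \<in> space (config_dist c R m n). E n \<omega>})"

definition uav_dist :: "real \<times> real \<Rightarrow> real \<Rightarrow> real \<times> real \<Rightarrow> real" where
  "uav_dist c h x = sqrt ((dist x c)\<^sup>2 + h\<^sup>2)"

definition sinr ::
  "real \<times> real \<Rightarrow> real \<Rightarrow> real \<Rightarrow> real \<Rightarrow> real \<Rightarrow> nat \<Rightarrow>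
   (nat \<Rightarrow> (real \<times> real) \<times> real) \<Rightarrow> nat \<Rightarrow> real" where
  "sinr c h \<eta> P \<sigma>2 n \<omega> i =
     P * snd (\<omega> i) * uav_dist c h (fst (\<omega> i)) powr (- \<eta>) /
     ((\<Sum>j\<in>{..<n} - {i}. P * snd (\<omega> j) * uav_dist c h (fst (\<omega> j)) powr (- \<eta>)) + \<sigma>2)"

definition laplace_I ::
  "real \<Rightarrow> real \<Rightarrow> real \<Rightarrow> real \<Rightarrow> real \<Rightarrow> nat \<Rightarrow> real \<Rightarrow> real \<Rightarrow> real \<Rightarrow> real" where
  "laplace_I a lam h d \<eta> m P \<sigma>2 s =
     exp (- s * \<sigma>2 / P) *
     exp (- 2 * pi * lam * a *
          integral {h..d} (\<lambda>r. (1 - inverse ((1 + s * r powr (- \<eta>) / real m) ^ m)) * r))"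

end

theory Submission
  imports Defs
begin

lemma uav_dist_pos: "h > 0 \<Longrightarrow> uav_dist c h x > 0"
  unfolding uav_dist_def by (simp add: add_nonneg_pos)

lemma uav_dist_ge: "h > 0 \<Longrightarrow> uav_dist c h x \<ge> h"
  unfolding uav_dist_def by (metis abs_of_pos le_add_same_cancel2 real_sqrt_abs real_sqrt_le_mono zero_le_power2)

lemma gain_dist_eq:
  assumes "m \<ge> 1"
  shows "gain_dist m = density lborel (erlang_density (m - 1) (real m))"
  unfolding gain_dist_def
proof (rule density_cong)
  show "(\<lambda>g. ennreal (nakagami_density m g)) \<in> borel_measurable lborel"
    unfolding nakagami_density_def by measurable
  show "(\<lambda>x. ennreal (erlang_density (m - 1) (real m) x)) \<in> borel_measurable lborel"
    by measurable
  show "AE x in lborel. ennreal (nakagami_density m x) = ennreal (erlang_density (m - 1) (real m) x)"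
    using AE_lborel_singleton[of 0]
  proof eventually_elim
    case (elim x)
    have G: "Gamma (real m) = fact (m - 1)"
      using assms Gamma_fact[of "m - 1"] by (simp add: of_nat_diff)
    have "Suc (m - 1) = m" using assms by simp
    then show ?case using elim
      by (auto simp: nakagami_density_def erlang_density_def G)
  qed
qed

lemma prob_space_gain: "m \<ge> 1 \<Longrightarrow> prob_space (gain_dist m)"
  using gain_dist_eq[of m] prob_space_erlang_density[of "real m" "m - 1"] by simp

lemma AE_gain_pos: "AE g in gain_dist m. g > 0"
  unfolding gain_dist_def
  by (subst AE_density) (auto simp: nakagami_density_def split: if_splits)

lemma sets_gain [measurable_cong]: "sets (gain_dist m) = sets borel"
  unfolding gain_dist_def by simp

lemma prob_space_disk:
  assumes "R > 0"
  shows "prob_space (uniform_measure lborel (cball (c::real\<times>real) R))"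
proof (rule prob_space_uniform_measure)
  have "emeasure lborel (cball c R) = ennreal (unit_ball_vol (real DIM(real\<times>real)) * R ^ DIM(real\<times>real))"
    using assms by (intro emeasure_cball) auto
  also have "\<dots> = ennreal (pi * R^2)" by (simp add: unit_ball_vol_2 power2_eq_square)
  finally have e: "emeasure lborel (cball c R) = ennreal (pi * R^2)" .
  show "emeasure lborel (cball c R) \<noteq> 0" using e assms by simp
  show "emeasure lborel (cball c R) \<noteq> \<infinity>" using e by simp
qed

lemma emeasure_cball2: "R \<ge> 0 \<Longrightarrow> emeasure lborel (cball (c::real\<times>real) R) = ennreal (pi * R^2)"
proof -
  assume "R \<ge> 0"
  then have "emeasure lborel (cball c R) = ennreal (unit_ball_vol (real DIM(real\<times>real)) * R ^ DIM(real\<times>real))"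
    by (intro emeasure_cball) auto
  also have "\<dots> = ennreal (pi * R^2)" by (simp add: unit_ball_vol_2 power2_eq_square)
  finally show ?thesis .
qed

lemma measure_cball2: "R \<ge> 0 \<Longrightarrow> measure lborel (cball (c::real\<times>real) R) = pi * R^2"
  using emeasure_cball2[of R c] by (simp add: measure_def)

lemma prob_space_mark: "R > 0 \<Longrightarrow> m \<ge> 1 \<Longrightarrow> prob_space (mark_dist c R m)"
  unfolding mark_dist_def by (intro prob_space_pair prob_space_disk prob_space_gain)

lemma sets_mark [measurable_cong]: "sets (mark_dist c R m) = sets (borel \<Otimes>\<^sub>M borel)"
  unfolding mark_dist_def by (intro sets_pair_measure_cong) (simp_all add: sets_gain)

lemma AE_mark:
  assumes "R > 0" "m \<ge> 1"
  shows "AE x in mark_dist c R m. snd x > 0 \<and> fst x \<in> cball c R"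
proof -
  interpret D: prob_space "uniform_measure lborel (cball c R)" using prob_space_disk assms by blast
  interpret G: prob_space "gain_dist m" using prob_space_gain assms by blast
  interpret pair_prob_space "uniform_measure lborel (cball c R)" "gain_dist m" ..
  have [measurable]: "cball c R \<in> sets (borel :: (real\<times>real) measure)" by simp
  have "AE x in uniform_measure lborel (cball c R). AE g in gain_dist m. snd (x,g) > 0 \<and> fst (x,g) \<in> cball c R"
    using AE_uniform_measureI[of "cball c R" lborel "\<lambda>x. x \<in> cball c R"]
    by (auto intro!: AE_gain_pos)
  moreover have "{x \<in> space (uniform_measure lborel (cball c R) \<Otimes>\<^sub>M gain_dist m). snd x > 0 \<and> fst x \<in> cball c R}
     \<in> sets (uniform_measure lborel (cball c R) \<Otimes>\<^sub>M gain_dist m)"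
    by measurable
  ultimately show ?thesis unfolding mark_dist_def
    by (intro AE_pair_measure) auto
qed



lemma nn_int_2r:
  assumes "0 \<le> a" "a \<le> b" "R > 0"
  shows "(\<integral>\<^sup>+ r. ennreal (indicator {a..b} r * (2*r/R\<^sup>2)) \<partial>lborel) = ennreal ((b\<^sup>2 - a\<^sup>2)/R\<^sup>2)"
proof -
  have cont: "continuous_on {a..b} (\<lambda>r. 2*r/R\<^sup>2)" using assms by (intro continuous_intros) auto
  have int: "integrable lborel (\<lambda>r. indicator {a..b} r *\<^sub>R (2*r/R\<^sup>2))"
    using borel_integrable_atLeastAtMost'[OF cont]
    by (simp add: set_integrable_def)
  have "integral\<^sup>L lborel (\<lambda>r. indicator {a..b} r *\<^sub>R (2*r/R\<^sup>2)) = b\<^sup>2/R\<^sup>2 - a\<^sup>2/R\<^sup>2"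
    by (rule integral_FTC_atLeastAtMost[where F="\<lambda>r. r\<^sup>2/R\<^sup>2"])
       (use assms in \<open>auto intro!: derivative_eq_intros continuous_intros
             simp: has_real_derivative_iff_has_vector_derivative[symmetric] field_simps power2_eq_square\<close>)
  then show ?thesis
    using int assms
    by (subst nn_integral_eq_integral) (auto simp: indicator_def diff_divide_distrib)
qed

definition rdens :: "real \<Rightarrow> real \<Rightarrow> real \<Rightarrow> real \<Rightarrow> real" where
  "rdens h d R r = indicator {h..d} r * (2*r/R\<^sup>2)"

lemma rdens_meas[measurable]: "rdens h d R \<in> borel_measurable borel"
  unfolding rdens_def by measurable

lemma uav_dist_meas[measurable]: "uav_dist c h \<in> borel_measurable borel"
  unfolding uav_dist_def by measurable

lemma disk_distr:
  assumes "R > 0" "h > 0" "d = sqrt (h\<^sup>2 + R\<^sup>2)"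
  shows "distr (uniform_measure lborel (cball c R)) lborel (uav_dist c h)
       = density lborel (\<lambda>r. ennreal (rdens h d R r))"
proof (rule cdf_unique)
  let ?U = "uniform_measure lborel (cball c R)"
  let ?D = "density lborel (\<lambda>r. ennreal (rdens h d R r))"
  interpret U: prob_space ?U using prob_space_disk[OF assms(1)] .
  have hd: "h \<le> d" using assms by (simp add: real_le_rsqrt)
  have d2: "d\<^sup>2 = h\<^sup>2 + R\<^sup>2" using assms by simp
  show "real_distribution (distr ?U lborel (uav_dist c h))"
    unfolding real_distribution_def real_distribution_axioms_def
    by (auto intro!: U.prob_space_distr)
  have Dtot: "emeasure ?D UNIV = 1"
    using nn_int_2r[of h d R] assms hd d2
    by (simp add: emeasure_density rdens_def mult.commute)
  show "real_distribution ?D"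
    unfolding real_distribution_def real_distribution_axioms_def
    by (auto intro!: prob_spaceI simp: Dtot)
  show "cdf (distr ?U lborel (uav_dist c h)) = cdf ?D"
  proof
    fix x :: real
    have "emeasure ?D {..x} = (\<integral>\<^sup>+ r. ennreal (rdens h d R r) * indicator {..x} r \<partial>lborel)"
      by (simp add: emeasure_density)
    also have "\<dots> = ennreal (if x < h then 0 else if x \<le> d then (x\<^sup>2 - h\<^sup>2)/R\<^sup>2 else 1)"
    proof (cases "x < h")
      case True
      then show ?thesis
        by (auto intro!: nn_integral_zero' AE_I2 simp: rdens_def indicator_def)
    next
      case False
      have "(\<integral>\<^sup>+ r. ennreal (rdens h d R r) * indicator {..x} r \<partial>lborel)
           = (\<integral>\<^sup>+ r. ennreal (indicator {h..min x d} r * (2*r/R\<^sup>2)) \<partial>lborel)"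
        by (intro nn_integral_cong) (auto simp: rdens_def indicator_def)
      also have "\<dots> = ennreal (((min x d)\<^sup>2 - h\<^sup>2)/R\<^sup>2)"
        using False assms hd by (intro nn_int_2r) auto
      finally show ?thesis using False d2 assms by (auto simp: min_def)
    qed
    finally have eD: "emeasure ?D {..x} = ennreal (if x < h then 0 else if x \<le> d then (x\<^sup>2 - h\<^sup>2)/R\<^sup>2 else 1)" .
    have "cdf ?D x = (if x < h then 0 else if x \<le> d then (x\<^sup>2 - h\<^sup>2)/R\<^sup>2 else 1)"
      unfolding cdf_def2 measure_def eD using assms hd
      by (auto intro!: enn2real_ennreal divide_nonneg_pos power_mono)
    moreover
    have "cdf (distr ?U lborel (uav_dist c h)) x = (if x < h then 0 else if x \<le> d then (x\<^sup>2 - h\<^sup>2)/R\<^sup>2 else 1)"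
    proof -
    have "cdf (distr ?U lborel (uav_dist c h)) x = measure ?U (uav_dist c h -` {..x})"
      unfolding cdf_def2 by (subst measure_distr) auto
    also have "\<dots> = measure lborel (cball c R \<inter> uav_dist c h -` {..x}) / measure lborel (cball c R)"
      using emeasure_cball2[of R c] assms measurable_sets_borel[OF uav_dist_meas, of "{..x}" c h]
      by (subst measure_uniform_measure) auto
    also have "\<dots> = (if x < h then 0 else if x \<le> d then (x\<^sup>2 - h\<^sup>2)/R\<^sup>2 else 1)"
    proof -
      have mc: "measure lborel (cball c R) = pi * R\<^sup>2" using measure_cball2 assms by simp
      consider "x < h" | "h \<le> x" "x \<le> d" | "d < x" by linarith
      then show ?thesis
      proof cases
        case 1
        then have "cball c R \<inter> uav_dist c h -` {..x} = {}"
          using uav_dist_ge[OF assms(2), of c] by (auto simp: not_le) (meson not_le order.trans)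
        then show ?thesis using 1 by simp
      next
        case 2
        have "cball c R \<inter> uav_dist c h -` {..x} = cball c (sqrt (x\<^sup>2 - h\<^sup>2))"
        proof (safe)
          fix y assume y: "y \<in> cball c R" "uav_dist c h y \<le> x"
          have "(dist y c)\<^sup>2 + h\<^sup>2 \<le> x\<^sup>2"
            using y(2) 2 assms unfolding uav_dist_def
            by (metis add_nonneg_nonneg real_sqrt_le_iff sqrt_le_D zero_le_power2)
          then show "y \<in> cball c (sqrt (x\<^sup>2 - h\<^sup>2))"
            by (simp add: dist_commute real_le_rsqrt)
        next
          fix y assume y: "y \<in> cball c (sqrt (x\<^sup>2 - h\<^sup>2))"
          have xh: "x\<^sup>2 - h\<^sup>2 \<ge> 0" using 2 assms by (simp add: power_mono)
          have "dist c y \<le> sqrt (x\<^sup>2 - h\<^sup>2)" using y by simp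
          then have dy: "(dist c y)\<^sup>2 \<le> x\<^sup>2 - h\<^sup>2"
            using xh by (metis zero_le_dist power_mono real_sqrt_pow2)
          have "x\<^sup>2 \<le> d\<^sup>2" using 2 assms hd by (intro power_mono) auto
          then have "(dist c y)\<^sup>2 \<le> R\<^sup>2" using dy d2 by simp
          then show "y \<in> cball c R" using assms
            by (simp add: power2_le_iff_abs_le)
          have "sqrt ((dist y c)\<^sup>2 + h\<^sup>2) \<le> sqrt (x\<^sup>2)"
            using dy by (intro real_sqrt_le_mono) (simp add: dist_commute)
          then show "y \<in> uav_dist c h -` {..x}" using 2 assms by (simp add: uav_dist_def)
        qed
        moreover have "x\<^sup>2 - h\<^sup>2 \<ge> 0" using 2 assms by (simp add: power_mono)
        ultimately show ?thesis using 2 mc assms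
          by (simp add: measure_cball2)
      next
        case 3
        have "cball c R \<inter> uav_dist c h -` {..x} = cball c R"
        proof safe
          fix y assume y: "y \<in> cball c R"
          then have "dist y c \<le> R" by (simp add: dist_commute)
          then have "(dist y c)\<^sup>2 \<le> R\<^sup>2" by (simp add: power_mono)
          then have "uav_dist c h y \<le> d" unfolding uav_dist_def assms(3) by simp
          then show "y \<in> uav_dist c h -` {..x}" using 3 by simp
        qed
        moreover have "\<not> x < h" "\<not> x \<le> d" using 3 hd by auto
        ultimately show ?thesis using mc assms by simp
      qed
    qed
    finally show ?thesis .
    qed
    ultimately show "cdf (distr ?U lborel (uav_dist c h)) x = cdf ?D x" by simp
  qed
qed

lemma disk_integral:
  assumes "R > 0" "h > 0" "d = sqrt (h\<^sup>2 + R\<^sup>2)"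
    and cont: "continuous_on {h..d} F"
    and meas: "(\<lambda>y. F (uav_dist c h y)) \<in> borel_measurable borel"
  shows "integral\<^sup>L (uniform_measure lborel (cball c R)) (\<lambda>y. F (uav_dist c h y))
       = integral {h..d} (\<lambda>r. 2*r/R\<^sup>2 * F r)"
proof -
  let ?U = "uniform_measure lborel (cball c R)"
  interpret U: prob_space ?U using prob_space_disk[OF assms(1)] .
  have hd: "h \<le> d" using assms by (simp add: real_le_rsqrt)
  define F' where "F' r = F (max h (min d r))" for r
  have contF': "continuous_on UNIV F'"
    unfolding F'_def
    by (rule continuous_on_compose2[OF cont]) (auto intro!: continuous_intros simp: hd)
  have F'm[measurable]: "F' \<in> borel_measurable borel"
    using contF' by (rule borel_measurable_continuous_onI)
  have "integral\<^sup>L ?U (\<lambda>y. F (uav_dist c h y)) = integral\<^sup>L ?U (\<lambda>y. F' (uav_dist c h y))"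
  proof (rule integral_cong_AE)
    show "(\<lambda>y. F (uav_dist c h y)) \<in> borel_measurable ?U" using meas by simp
    show "(\<lambda>y. F' (uav_dist c h y)) \<in> borel_measurable ?U" by simp
    have [measurable]: "cball c R \<in> sets (borel :: (real\<times>real) measure)" by simp
    show "AE y in ?U. F (uav_dist c h y) = F' (uav_dist c h y)"
    proof -
    have "AE y in ?U. y \<in> cball c R" by (rule AE_uniform_measureI) auto
    then show ?thesis
    proof eventually_elim
      fix y assume "y \<in> cball c R"
      then have "dist c y \<le> R" by simp
      then have "(dist y c)\<^sup>2 \<le> R\<^sup>2" by (simp add: dist_commute power_mono)
      then have "uav_dist c h y \<le> d" unfolding uav_dist_def assms(3) by simp
      moreover have "h \<le> uav_dist c h y" by (rule uav_dist_ge[OF assms(2)])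
      ultimately show "F (uav_dist c h y) = F' (uav_dist c h y)" by (simp add: F'_def)
    qed
    qed
  qed
  also have "\<dots> = integral\<^sup>L (distr ?U lborel (uav_dist c h)) F'"
    by (subst integral_distr) auto
  also have "\<dots> = integral\<^sup>L (density lborel (\<lambda>r. ennreal (rdens h d R r))) F'"
    using disk_distr[OF assms(1-3)] by simp
  also have "\<dots> = integral\<^sup>L lborel (\<lambda>r. rdens h d R r *\<^sub>R F' r)"
    using assms by (subst integral_density) (auto simp: rdens_def indicator_def intro!: AE_I2)
  also have "\<dots> = integral\<^sup>L lborel (\<lambda>r. indicator {h..d} r *\<^sub>R (2*r/R\<^sup>2 * F r))"
    by (intro Bochner_Integration.integral_cong) (auto simp: rdens_def F'_def indicator_def)
  also have "\<dots> = integral {h..d} (\<lambda>r. 2*r/R\<^sup>2 * F r)"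
  proof -
    have c2: "continuous_on {h..d} (\<lambda>r. 2*r/R\<^sup>2 * F r)"
      using assms by (intro continuous_intros cont) auto
    show ?thesis
      using set_borel_integral_eq_integral(2)[OF borel_integrable_atLeastAtMost'[OF c2]]
      by (simp add: set_lebesgue_integral_def)
  qed
  finally show ?thesis .
qed



lemma erlang_integral_1:
  assumes "l > 0"
  shows "integral\<^sup>L lborel (erlang_density k l) = 1"
proof -
  have "(\<integral>\<^sup>+ x. ennreal (erlang_density k l x) \<partial>lborel) = ennreal 1"
    using nn_integral_erlang_ith_moment[OF assms, of k 0] by simp
  then show ?thesis
    using assms by (subst (asm) nn_integral_eq_integrable) auto
qed

lemma gamma_laplace:
  assumes m: "m \<ge> 1" and u: "u \<ge> 0"
  shows "integral\<^sup>L (gain_dist m) (\<lambda>g. exp (- u * g)) = inverse ((1 + u / real m) ^ m)"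
proof -
  have mpos: "real m > 0" using m by simp
  have sm: "Suc (m - 1) = m" using m by simp
  have "integral\<^sup>L (gain_dist m) (\<lambda>g. exp (- u * g))
      = integral\<^sup>L lborel (\<lambda>g. erlang_density (m - 1) (real m) g *\<^sub>R exp (- u * g))"
    unfolding gain_dist_eq[OF m] using mpos
    by (subst integral_density) auto
  also have "\<dots> = integral\<^sup>L lborel (\<lambda>g. (real m / (real m + u)) ^ m * erlang_density (m - 1) (real m + u) g)"
  proof (intro Bochner_Integration.integral_cong refl)
    fix g
    show "erlang_density (m - 1) (real m) g *\<^sub>R exp (- u * g) =
          (real m / (real m + u)) ^ m * erlang_density (m - 1) (real m + u) g"
      using mpos u
      by (auto simp: erlang_density_def sm power_divide field_simps exp_add[symmetric]
                     exp_minus)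
  qed
  also have "\<dots> = (real m / (real m + u)) ^ m"
    using mpos u erlang_integral_1[of "real m + u" "m - 1"] by simp
  also have "\<dots> = inverse ((1 + u / real m) ^ m)"
    using mpos u by (simp add: power_inverse[symmetric] field_simps)
  finally show ?thesis .
qed

lemma gamma_tail:
  assumes m: "m \<ge> 1" and T: "T \<ge> 0"
  shows "measure (gain_dist m) {g. T \<le> g} = (\<Sum>k<m. (real m * T) ^ k * exp (- real m * T) / fact k)"
proof -
  have mpos: "real m > 0" using m by simp
  interpret G: prob_space "gain_dist m" using prob_space_gain[OF m] .
  let ?D = "density lborel (\<lambda>x. ennreal (erlang_density (m - 1) (real m) x))"
  have sp: "space (gain_dist m) = UNIV" by (simp add: gain_dist_def)
  have "emeasure ?D {..<T} = (\<integral>\<^sup>+ x. ennreal (erlang_density (m - 1) (real m) x) * indicator {..<T} x \<partial>lborel)"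
    by (subst emeasure_density) auto
  also have "\<dots> = (\<integral>\<^sup>+ x. ennreal (erlang_density (m - 1) (real m) x) * indicator {..T} x \<partial>lborel)"
    using AE_lborel_singleton[of T]
    by (intro nn_integral_cong_AE) (auto elim!: eventually_mono simp: indicator_def)
  also have "\<dots> = erlang_CDF (m - 1) (real m) T"
    using nn_integral_erlang_density[OF mpos] by simp
  finally have e: "emeasure (gain_dist m) {..<T} = erlang_CDF (m - 1) (real m) T"
    using gain_dist_eq[OF m] by simp
  have "measure (gain_dist m) {g. T \<le> g} = 1 - measure (gain_dist m) {..<T}"
  proof -
    have "{g. T \<le> g} = space (gain_dist m) - {..<T}" by (auto simp: sp)
    then show ?thesis using G.prob_compl[of "{..<T}"] by (simp add: sets_gain)
  qed
  also have "measure (gain_dist m) {..<T} = erlang_CDF (m - 1) (real m) T"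
    using e erlang_CDF_nonneg[OF mpos] by (simp add: measure_def)
  also have "1 - erlang_CDF (m - 1) (real m) T = (\<Sum>k\<le>m-1. (real m * T) ^ k * exp (- real m * T) / fact k)"
    using T by (simp add: erlang_CDF_def)
  also have "{..m-1} = {..<m}" using m by auto
  finally show ?thesis by simp
qed



lemma pow_div_fact_le_exp:
  fixes x :: real assumes "x \<ge> 0" shows "x ^ n / fact n \<le> exp x"
proof -
  have "(\<Sum>i\<in>{n}. x ^ i / fact i) \<le> (\<Sum>i. x ^ i / fact i)"
    using assms summable_exp_generic[of x]
    by (intro sum_le_suminf) (auto simp: divide_inverse ac_simps)
  then show ?thesis by (simp add: exp_def divide_inverse ac_simps)
qed

lemma pow_exp_bound:
  fixes z c :: real assumes "z \<ge> 0" "c > 0"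
  shows "z ^ k * exp (- c * z) \<le> fact k / c ^ k"
proof -
  have "(c * z) ^ k / fact k \<le> exp (c * z)" using assms by (intro pow_div_fact_le_exp) auto
  then have "c ^ k * z ^ k \<le> fact k * exp (c * z)"
    by (simp add: power_mult_distrib divide_le_eq mult.commute)
  then show ?thesis using assms
    by (simp add: exp_minus field_simps)
qed

lemma abs_exp_minus_one_le: fixes a :: real shows "\<bar>exp a - 1\<bar> \<le> \<bar>a\<bar> * exp \<bar>a\<bar>"
proof (cases "a \<ge> 0")
  case True
  have "1 - a \<le> exp (- a)" using exp_ge_add_one_self[of "-a"] by simp
  then have "exp a * (1 - a) \<le> exp a * exp (-a)" by (intro mult_left_mono) auto
  then have "exp a - 1 \<le> a * exp a" by (simp add: exp_minus field_simps)
  then show ?thesis using True by auto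
next
  case False
  have "1 + a \<le> exp a" by (rule exp_ge_add_one_self)
  moreover have "exp a \<le> 1" using False by simp
  moreover have "1 \<le> exp \<bar>a\<bar>" by simp
  ultimately show ?thesis using False
    by (smt (verit, best) mult_le_cancel_left1)
qed

lemma diff_quot_bound:
  fixes z t h :: real assumes "z \<ge> 0" "t > 0" "\<bar>h\<bar> < t / 2" "h \<noteq> 0"
  shows "\<bar>(exp (- (t + h) * z) - exp (- t * z)) / h\<bar> \<le> z * exp (- (t/2) * z)"
proof -
  have "exp (- (t + h) * z) - exp (- t * z) = exp (- t * z) * (exp (- h * z) - 1)"
    by (simp add: algebra_simps exp_add[symmetric])
  then have "\<bar>exp (- (t + h) * z) - exp (- t * z)\<bar> \<le> exp (- t * z) * (\<bar>h * z\<bar> * exp \<bar>h * z\<bar>)"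
    using abs_exp_minus_one_le[of "- h * z"] by (simp add: abs_mult)
  also have "\<dots> = \<bar>h\<bar> * z * exp (- t * z + \<bar>h\<bar> * z)"
    using assms by (simp add: abs_mult exp_add[symmetric] algebra_simps)
  also have "\<dots> \<le> \<bar>h\<bar> * z * exp (- (t/2) * z)"
  proof -
    have "\<bar>h\<bar> * z \<le> (t/2) * z" using assms by (intro mult_right_mono) auto
    then have "- t * z + \<bar>h\<bar> * z \<le> - (t/2) * z" by linarith
    then show ?thesis using assms by (intro mult_left_mono) auto
  qed
  finally show ?thesis using assms by (simp add: divide_le_eq abs_divide mult.commute mult.left_commute)
qed

locale lap_setup =
  fixes M :: "'a measure" and Z :: "'a \<Rightarrow> real"
  assumes fin: "finite_measure M"
    and Zm[measurable]: "Z \<in> borel_measurable M"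
    and Zpos: "AE x in M. Z x \<ge> 0"
begin

definition F :: "nat \<Rightarrow> real \<Rightarrow> real" where
  "F k s = (\<integral>x. Z x ^ k * exp (- s * Z x) \<partial>M)"

lemma integrable_F: "s > 0 \<Longrightarrow> integrable M (\<lambda>x. Z x ^ k * exp (- s * Z x))"
proof -
  assume s: "s > 0"
  interpret finite_measure M by (rule fin)
  show ?thesis
  proof (rule integrable_const_bound[where B="fact k / s ^ k"])
    show "AE x in M. norm (Z x ^ k * exp (- s * Z x)) \<le> fact k / s ^ k"
      using Zpos by eventually_elim (use s pow_exp_bound in auto)
  qed simp
qed

lemma F_bound: "s > 0 \<Longrightarrow> \<bar>F k s\<bar> \<le> measure M (space M) * (fact k / s ^ k)"
proof -
  assume s: "s > 0"
  interpret finite_measure M by (rule fin)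
  have "\<bar>F k s\<bar> \<le> (\<integral>x. \<bar>Z x ^ k * exp (- s * Z x)\<bar> \<partial>M)"
    unfolding F_def using integral_norm_bound[of M "\<lambda>x. Z x ^ k * exp (- s * Z x)"] by simp
  also have "\<dots> \<le> (\<integral>x. fact k / s ^ k \<partial>M)"
  proof (rule integral_mono_AE)
    show "integrable M (\<lambda>x. \<bar>Z x ^ k * exp (- s * Z x)\<bar>)" using integrable_F[OF s, of k] by simp
    show "AE x in M. \<bar>Z x ^ k * exp (- s * Z x)\<bar> \<le> fact k / s ^ k"
      using Zpos by eventually_elim (use s pow_exp_bound in auto)
  qed simp
  finally have "\<bar>F k s\<bar> \<le> (\<integral>x. fact k / s ^ k \<partial>M)" .
  then show ?thesis by simp
qed

lemma F_deriv:
  assumes t: "t > 0"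
  shows "(F k has_real_derivative - F (Suc k) t) (at t)"
proof -
  interpret finite_measure M by (rule fin)
  let ?S = "{-t/2<..<t/2}"
  let ?q = "\<lambda>h. (F k (t + h) - F k t) / h"
  have "(?q \<longlongrightarrow> - F (Suc k) t) (at 0 within ?S)"
  proof (subst tendsto_at_iff_sequentially, intro allI impI)
    fix X :: "nat \<Rightarrow> real" assume X: "\<forall>i. X i \<in> ?S - {0}" and X0: "X \<longlonglongrightarrow> 0"
    have Xb: "\<bar>X i\<bar> < t/2" "X i \<noteq> 0" "t + X i > 0" for i using X[rule_format, of i] by auto
    let ?s = "\<lambda>i x. Z x ^ k * ((exp (- (t + X i) * Z x) - exp (- t * Z x)) / X i)"
    have q_eq: "?q (X i) = integral\<^sup>L M (?s i)" for i
    proof -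
      have "?q (X i) = (\<integral>x. Z x ^ k * exp (- (t + X i) * Z x) - Z x ^ k * exp (- t * Z x) \<partial>M) / X i"
        unfolding F_def using Xb(3)[of i] t integrable_F[of "t + X i" k] integrable_F[of t k]
        by (subst Bochner_Integration.integral_diff) auto
      also have "\<dots> = integral\<^sup>L M (?s i)"
        by (simp add: right_diff_distrib)
      finally show ?thesis .
    qed
    have "(\<lambda>i. integral\<^sup>L M (?s i)) \<longlonglongrightarrow> (\<integral>x. - (Z x ^ Suc k * exp (- t * Z x)) \<partial>M)"
    proof (rule integral_dominated_convergence[where w="\<lambda>_. fact (Suc k) / (t/2) ^ Suc k"])
      show "(\<lambda>x. - (Z x ^ Suc k * exp (- t * Z x))) \<in> borel_measurable M" by simp
      show "\<And>i. ?s i \<in> borel_measurable M" by simp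
      show "integrable M (\<lambda>_. fact (Suc k) / (t/2) ^ Suc k)" by simp
      show "AE x in M. (\<lambda>i. ?s i x) \<longlonglongrightarrow> - (Z x ^ Suc k * exp (- t * Z x))"
      proof (rule AE_I2)
        fix x
        have d: "((\<lambda>s. exp (- s * Z x)) has_real_derivative - Z x * exp (- t * Z x)) (at t)"
          by (auto intro!: derivative_eq_intros)
        then have "((\<lambda>h. (exp (- (t + h) * Z x) - exp (- t * Z x)) / h) \<longlongrightarrow> - Z x * exp (- t * Z x)) (at 0)"
          unfolding DERIV_def by simp
        moreover have "filterlim X (at 0) sequentially"
          using X0 Xb(2) by (auto simp: filterlim_at)
        ultimately have "(\<lambda>i. (exp (- (t + X i) * Z x) - exp (- t * Z x)) / X i) \<longlonglongrightarrow> - Z x * exp (- t * Z x)"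
          by (rule filterlim_compose)
        then have "(\<lambda>i. ?s i x) \<longlonglongrightarrow> Z x ^ k * (- Z x * exp (- t * Z x))"
          by (rule tendsto_mult_left)
        moreover have "Z x ^ k * (- Z x * exp (- t * Z x)) = - (Z x ^ Suc k * exp (- t * Z x))"
          by (simp add: algebra_simps)
        ultimately show "(\<lambda>i. ?s i x) \<longlonglongrightarrow> - (Z x ^ Suc k * exp (- t * Z x))"
          by metis
      qed
      show "AE x in M. norm (?s i x) \<le> fact (Suc k) / (t/2) ^ Suc k" for i
        using Zpos
      proof eventually_elim
        case (elim x)
        have "norm (?s i x) = Z x ^ k * \<bar>(exp (- (t + X i) * Z x) - exp (- t * Z x)) / X i\<bar>"
          using elim by (simp add: abs_mult)
        also have "\<dots> \<le> Z x ^ k * (Z x * exp (- (t/2) * Z x))"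
          using elim Xb[of i] t by (intro mult_left_mono diff_quot_bound) auto
        also have "\<dots> = Z x ^ Suc k * exp (- (t/2) * Z x)" by simp
        also have "\<dots> \<le> fact (Suc k) / (t/2) ^ Suc k"
          using elim t by (intro pow_exp_bound) auto
        finally show ?case .
      qed
    qed
    then have "(\<lambda>i. integral\<^sup>L M (?s i)) \<longlonglongrightarrow> - F (Suc k) t"
      unfolding F_def by simp
    then show "(?q \<circ> X) \<longlonglongrightarrow> - F (Suc k) t"
      by (simp only: comp_def q_eq)
  qed
  moreover have "at (0::real) within ?S = at 0"
    using t by (intro at_within_open) auto
  ultimately show ?thesis unfolding DERIV_def by simp
qed

end



lemma deriv_funpow_eq:
  fixes f :: "nat \<Rightarrow> real \<Rightarrow> real" and g :: "real \<Rightarrow> real"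
  assumes D: "\<And>k s. s > 0 \<Longrightarrow> (f k has_real_derivative - f (Suc k) s) (at s)"
    and g: "\<And>s. s > 0 \<Longrightarrow> g s = f 0 s"
  shows "s > 0 \<Longrightarrow> (deriv ^^ k) g s = (-1) ^ k * f k s"
proof (induction k arbitrary: s)
  case 0
  then show ?case using g by simp
next
  case (Suc k)
  have ev: "eventually (\<lambda>x. (deriv ^^ k) g x = (-1) ^ k * f k x) (nhds s)"
    using Suc.IH eventually_nhds_in_open[of "{0<..}" s] Suc.prems
    by (auto elim!: eventually_mono)
  have "((\<lambda>x. (-1) ^ k * f k x) has_real_derivative (-1) ^ k * (- f (Suc k) s)) (at s)"
    using D[OF Suc.prems, of k] by (rule DERIV_cmult)
  then have "((deriv ^^ k) g has_real_derivative (-1) ^ k * (- f (Suc k) s)) (at s)"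
    using ev by (subst DERIV_cong_ev[OF refl ev refl])
  then have "deriv ((deriv ^^ k) g) s = (-1) ^ k * (- f (Suc k) s)"
    by (rule DERIV_imp_deriv)
  then show ?case by simp
qed

lemma series_deriv:
  fixes f :: "nat \<Rightarrow> nat \<Rightarrow> real \<Rightarrow> real" and p :: "nat \<Rightarrow> real" and B :: "nat \<Rightarrow> real \<Rightarrow> real"
  assumes D: "\<And>n k s. s > 0 \<Longrightarrow> (f n k has_real_derivative - f n (Suc k) s) (at s)"
    and bound: "\<And>n k s. s > 0 \<Longrightarrow> \<bar>f n k s\<bar> \<le> B k s"
    and Bmono: "\<And>k s t. 0 < t \<Longrightarrow> t \<le> s \<Longrightarrow> B k s \<le> B k t"
    and p: "summable (\<lambda>n. \<bar>p n\<bar>)"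
    and s: "s > 0"
  shows "summable (\<lambda>n. p n * f n k s)"
    "((\<lambda>s. \<Sum>n. p n * f n k s) has_real_derivative - (\<Sum>n. p n * f n (Suc k) s)) (at s)"
proof -
  let ?S = "{s/2<..}"
  have sm: "summable (\<lambda>n. \<bar>p n\<bar> * B j (s/2))" for j
    using p by (rule summable_mult2)
  have uc: "uniformly_convergent_on ?S (\<lambda>n x. \<Sum>i<n. p i * - f i (Suc k) x)"
  proof (rule Weierstrass_m_test'[OF _ sm[of "Suc k"]])
    fix n x assume x: "x \<in> ?S"
    then have "x > 0" "s/2 \<le> x" using s by auto
    then have "\<bar>f n (Suc k) x\<bar> \<le> B (Suc k) (s/2)"
      using bound[of x n "Suc k"] Bmono[of "s/2" x "Suc k"] s by linarith
    then show "norm (p n * - f n (Suc k) x) \<le> \<bar>p n\<bar> * B (Suc k) (s/2)"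
      unfolding real_norm_def abs_mult abs_minus_cancel by (intro mult_left_mono) auto
  qed
  have sumj: "summable (\<lambda>n. p n * f n j s)" for j
  proof (rule summable_comparison_test[OF _ sm[of j]])
    have "\<bar>f n j s\<bar> \<le> B j (s/2)" for n
    proof -
      have "B j s \<le> B j (s/2)" using Bmono[of "s/2" s j] s by simp
      then show ?thesis using bound[OF s, of n j] by linarith
    qed
    then have "norm (p n * f n j s) \<le> \<bar>p n\<bar> * B j (s/2)" for n
      unfolding real_norm_def abs_mult by (intro mult_left_mono) auto
    then show "\<exists>N. \<forall>n\<ge>N. norm (p n * f n j s) \<le> \<bar>p n\<bar> * B j (s/2)"
      by blast
  qed
  note sum0 = sumj[of k]
  then show "summable (\<lambda>n. p n * f n k s)" .
  have "((\<lambda>x. \<Sum>n. p n * f n k x) has_real_derivative (\<Sum>n. p n * - f n (Suc k) s)) (at s)"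
  proof -
    have cv: "convex ?S" by simp
    have dd: "\<And>n x. x \<in> ?S \<Longrightarrow> ((\<lambda>x. p n * f n k x) has_real_derivative p n * - f n (Suc k) x) (at x within ?S)"
    proof -
      fix n x assume "x \<in> ?S"
      then have "x > 0" using s by auto
      then have "(f n k has_real_derivative - f n (Suc k) x) (at x)" by (rule D)
      then have "((\<lambda>x. p n * f n k x) has_real_derivative p n * - f n (Suc k) x) (at x)"
        by (rule DERIV_cmult)
      then show "((\<lambda>x. p n * f n k x) has_real_derivative p n * - f n (Suc k) x) (at x within ?S)"
        by (rule has_field_derivative_at_within)
    qed
    have i1: "s \<in> ?S" using s by simp
    have i2: "s \<in> interior ?S" using s by (subst interior_open) auto
    show ?thesis using has_field_derivative_series'(2)[OF cv dd uc i1 sum0 i2] .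
  qed
  then show "((\<lambda>s. \<Sum>n. p n * f n k s) has_real_derivative - (\<Sum>n. p n * f n (Suc k) s)) (at s)"
    using suminf_minus[OF sumj[of "Suc k"]] by simp
qed



locale sysm =
  fixes c :: "real \<times> real" and R h \<eta> P \<sigma>2 d :: real and m :: nat
  assumes R: "R > 0" and h: "h > 0" and dd: "d = sqrt (h\<^sup>2 + R\<^sup>2)" and P: "P > 0"
    and sig: "\<sigma>2 > 0" and m: "m \<ge> 1"
begin

abbreviation "\<mu> \<equiv> mark_dist c R m"
abbreviation "Q J \<equiv> PiM J (\<lambda>_::nat. \<mu>)"

definition Yf :: "(real \<times> real) \<times> real \<Rightarrow> real" where
  "Yf x = snd x * uav_dist c h (fst x) powr (- \<eta>)"

definition IJ :: "nat set \<Rightarrow> (nat \<Rightarrow> (real \<times> real) \<times> real) \<Rightarrow> real" where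
  "IJ J \<omega> = (\<Sum>j\<in>J. Yf (\<omega> j)) + \<sigma>2 / P"

definition qf :: "real \<Rightarrow> real" where
  "qf s = (\<integral>x. exp (- s * Yf x) \<partial>\<mu>)"

definition Phi :: "nat \<Rightarrow> real \<Rightarrow> real" where
  "Phi n s = exp (- s * \<sigma>2 / P) * qf s ^ n"

lemma hd: "h \<le> d" using R h dd by (simp add: real_le_rsqrt)
lemma d2: "d\<^sup>2 = h\<^sup>2 + R\<^sup>2" using dd by simp

lemma prob_mu: "prob_space \<mu>" using prob_space_mark[OF R m] .

lemma prob_Q: "prob_space (Q J)"
  by (intro prob_space_PiM prob_mu)

lemma Yf_meas[measurable]: "Yf \<in> borel_measurable \<mu>"
  unfolding Yf_def by measurable

lemma Yf_nonneg: "snd x > 0 \<Longrightarrow> Yf x \<ge> 0"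
  unfolding Yf_def by simp

lemma AE_Q:
  assumes "finite J"
  shows "AE \<omega> in Q J. \<forall>j\<in>J. snd (\<omega> j) > 0 \<and> fst (\<omega> j) \<in> cball c R"
proof (rule AE_finite_allI[OF assms])
  fix j assume "j \<in> J"
  then show "AE \<omega> in Q J. snd (\<omega> j) > 0 \<and> fst (\<omega> j) \<in> cball c R"
    using AE_PiM_component[of J "\<lambda>_. \<mu>" j "\<lambda>x. snd x > 0 \<and> fst x \<in> cball c R"] AE_mark[OF R m]
      prob_mu by auto
qed

lemma IJ_meas[measurable]: "IJ J \<in> borel_measurable (Q J)"
  unfolding IJ_def
proof (intro borel_measurable_add borel_measurable_const borel_measurable_sum)
  fix j assume "j \<in> J"
  then show "(\<lambda>\<omega>. Yf (\<omega> j)) \<in> borel_measurable (Q J)" by measurable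
qed

lemma IJ_pos:
  assumes "finite J"
  shows "AE \<omega> in Q J. IJ J \<omega> \<ge> \<sigma>2 / P"
  using AE_Q[OF assms]
  by eventually_elim (auto simp: IJ_def intro!: sum_nonneg Yf_nonneg)

lemma lap: "finite J \<Longrightarrow> lap_setup (Q J) (IJ J)"
proof -
  assume J: "finite J"
  interpret prob_space "Q J" by (rule prob_Q)
  show ?thesis
    unfolding lap_setup_def
  proof (intro conjI)
    show "finite_measure (Q J)" by unfold_locales
    show "IJ J \<in> borel_measurable (Q J)" by simp
    show "AE x in Q J. 0 \<le> IJ J x"
      using IJ_pos[OF J] by eventually_elim (use P sig in \<open>auto intro: order.trans[rotated]\<close>)
  qed
qed

lemma integrable_expY:
  assumes "s \<ge> 0"
  shows "integrable \<mu> (\<lambda>x. exp (- s * Yf x))"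
proof -
  interpret prob_space \<mu> by (rule prob_mu)
  show ?thesis
  proof (rule integrable_const_bound[where B=1])
    show "AE x in \<mu>. norm (exp (- s * Yf x)) \<le> 1"
      using AE_mark[OF R m] by eventually_elim (use assms Yf_nonneg in auto)
  qed simp
qed

lemma prod_formula:
  assumes J: "finite J" and s: "s \<ge> 0"
  shows "(\<integral>\<omega>. exp (- s * IJ J \<omega>) \<partial>Q J) = Phi (card J) s"
proof -
  interpret PS: product_sigma_finite "\<lambda>_::nat. \<mu>"
    unfolding product_sigma_finite_def
    using prob_space_imp_sigma_finite[OF prob_mu] by simp
  have eq: "exp (- s * IJ J \<omega>) = exp (- s * \<sigma>2 / P) * (\<Prod>j\<in>J. exp (- s * Yf (\<omega> j)))" for \<omega>
  proof -
    have "- s * IJ J \<omega> = - s * \<sigma>2 / P + (\<Sum>j\<in>J. - s * Yf (\<omega> j))"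
      unfolding IJ_def by (simp add: sum_distrib_left ring_distribs)
    then show ?thesis by (simp only: exp_add exp_sum[OF J])
  qed
  have "(\<integral>\<omega>. exp (- s * IJ J \<omega>) \<partial>Q J) = exp (- s * \<sigma>2 / P) * (\<integral>\<omega>. (\<Prod>j\<in>J. exp (- s * Yf (\<omega> j))) \<partial>Q J)"
    unfolding eq by simp
  also have "(\<integral>\<omega>. (\<Prod>j\<in>J. exp (- s * Yf (\<omega> j))) \<partial>Q J) = (\<Prod>j\<in>J. qf s)"
    unfolding qf_def
    by (rule PS.product_integral_prod[OF J integrable_expY[OF s]])
  also have "(\<Prod>j\<in>J. qf s) = qf s ^ card J" by simp
  finally show ?thesis by (simp add: Phi_def)
qed

end



context sysm begin

lemma cont_lapint:
  assumes s: "s \<ge> 0"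
  shows "continuous_on {h..d} (\<lambda>r. inverse ((1 + s * r powr (- \<eta>) / real m) ^ m))"
proof -
  have pos: "1 + s * r powr (- \<eta>) / real m > 0" for r
    using s m by (intro add_pos_nonneg) auto
  show ?thesis
    using h pos m by (intro continuous_intros) (auto simp: less_imp_neq[symmetric] dest: order.strict_trans2)
qed

lemma qf_eq:
  assumes s: "s \<ge> 0"
  shows "qf s = integral {h..d} (\<lambda>r. 2*r/R\<^sup>2 * inverse ((1 + s * r powr (- \<eta>) / real m) ^ m))"
proof -
  let ?U = "uniform_measure lborel (cball c R)"
  let ?G = "gain_dist m"
  interpret U: prob_space ?U using prob_space_disk[OF R] .
  interpret G: prob_space ?G using prob_space_gain[OF m] .
  interpret UG: pair_prob_space ?U ?G ..
  have int: "integrable (?U \<Otimes>\<^sub>M ?G) (\<lambda>x. exp (- s * Yf x))"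
    using integrable_expY[OF s] unfolding mark_dist_def .
  have "qf s = (\<integral>y. (\<integral>g. exp (- s * Yf (y, g)) \<partial>?G) \<partial>?U)"
    unfolding qf_def mark_dist_def using UG.integral_fst'[OF int] by simp
  also have "\<dots> = (\<integral>y. inverse ((1 + s * uav_dist c h y powr (- \<eta>) / real m) ^ m) \<partial>?U)"
  proof (intro Bochner_Integration.integral_cong refl)
    fix y
    have "(\<integral>g. exp (- s * Yf (y, g)) \<partial>?G) = (\<integral>g. exp (- (s * uav_dist c h y powr (- \<eta>)) * g) \<partial>?G)"
      by (simp add: Yf_def algebra_simps)
    also have "\<dots> = inverse ((1 + s * uav_dist c h y powr (- \<eta>) / real m) ^ m)"
      using s by (subst gamma_laplace[OF m]) auto
    finally show "(\<integral>g. exp (- s * Yf (y, g)) \<partial>?G) = inverse ((1 + s * uav_dist c h y powr (- \<eta>) / real m) ^ m)" .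
  qed
  also have "\<dots> = integral {h..d} (\<lambda>r. 2*r/R\<^sup>2 * inverse ((1 + s * r powr (- \<eta>) / real m) ^ m))"
    by (rule disk_integral[OF R h dd cont_lapint[OF s]]) measurable
  finally show ?thesis .
qed

lemma int_r: "integral {h..d} (\<lambda>r. r) = R\<^sup>2 / 2"
proof -
  have "((\<lambda>r. r) has_integral (d\<^sup>2/2 - h\<^sup>2/2)) {h..d}"
    using hd by (intro fundamental_theorem_of_calculus)
       (auto intro!: derivative_eq_intros simp: has_real_derivative_iff_has_vector_derivative[symmetric])
  then show ?thesis using d2 by (simp add: integral_unique field_simps)
qed

lemma part1:
  fixes a lam s :: real
  assumes s: "s \<ge> 0"
  defines "\<Lambda> \<equiv> a * lam * pi * R\<^sup>2"
  shows "(\<lambda>n. exp (- \<Lambda>) * \<Lambda> ^ n / fact n * Phi n s) sums laplace_I a lam h d \<eta> m P \<sigma>2 s"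
proof -
  let ?g = "\<lambda>r. inverse ((1 + s * r powr (- \<eta>) / real m) ^ m)"
  define K where "K = integral {h..d} (\<lambda>r. ?g r * r)"
  have gi: "(\<lambda>r. ?g r * r) integrable_on {h..d}"
    by (intro integrable_continuous_interval continuous_intros cont_lapint[OF s])
  have ri: "(\<lambda>r. r) integrable_on {h..d}"
    by (intro integrable_continuous_interval continuous_intros)
  have q: "qf s = 2 / R\<^sup>2 * K"
  proof -
    have "qf s = integral {h..d} (\<lambda>r. (2 / R\<^sup>2) *\<^sub>R (?g r * r))"
      unfolding qf_eq[OF s] by (intro integral_cong) (simp add: field_simps)
    also have "\<dots> = 2 / R\<^sup>2 * K" unfolding integral_cmul K_def by simp
    finally show ?thesis .
  qed
  have L: "integral {h..d} (\<lambda>r. (1 - ?g r) * r) = R\<^sup>2/2 - K"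
  proof -
    have "integral {h..d} (\<lambda>r. (1 - ?g r) * r) = integral {h..d} (\<lambda>r. r - ?g r * r)"
      by (intro integral_cong) (simp add: algebra_simps)
    also have "\<dots> = R\<^sup>2/2 - K"
      unfolding K_def by (subst integral_diff[OF ri gi]) (simp add: int_r)
    finally show ?thesis .
  qed
  have "(\<lambda>n. (\<Lambda> * qf s) ^ n /\<^sub>R fact n) sums exp (\<Lambda> * qf s)" by (rule exp_converges)
  then have "(\<lambda>n. (exp (- s * \<sigma>2 / P) * exp (- \<Lambda>)) * ((\<Lambda> * qf s) ^ n /\<^sub>R fact n)) sums
             ((exp (- s * \<sigma>2 / P) * exp (- \<Lambda>)) * exp (\<Lambda> * qf s))"
    by (rule sums_mult)
  moreover have "(exp (- s * \<sigma>2 / P) * exp (- \<Lambda>)) * ((\<Lambda> * qf s) ^ n /\<^sub>R fact n)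
       = exp (- \<Lambda>) * \<Lambda> ^ n / fact n * Phi n s" for n
    by (simp add: Phi_def power_mult_distrib field_simps)
  moreover have "(exp (- s * \<sigma>2 / P) * exp (- \<Lambda>)) * exp (\<Lambda> * qf s) = laplace_I a lam h d \<eta> m P \<sigma>2 s"
  proof -
    have "- \<Lambda> + \<Lambda> * qf s = - 2 * pi * lam * a * integral {h..d} (\<lambda>r. (1 - ?g r) * r)"
      unfolding L q \<Lambda>_def using R by (simp add: field_simps)
    then show ?thesis
      unfolding laplace_I_def by (simp add: mult.assoc exp_add[symmetric])
  qed
  ultimately show ?thesis by simp
qed

end



context sysm begin

definition Fk :: "nat set \<Rightarrow> nat \<Rightarrow> real \<Rightarrow> real" where
  "Fk J k s = (\<integral>\<omega>. IJ J \<omega> ^ k * exp (- s * IJ J \<omega>) \<partial>Q J)"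

lemma Fk_deriv:
  assumes J: "finite J" and s: "s > 0"
  shows "(Fk J k has_real_derivative - Fk J (Suc k) s) (at s)"
proof -
  interpret L: lap_setup "Q J" "IJ J" by (rule lap[OF J])
  have "(L.F k has_real_derivative - L.F (Suc k) s) (at s)" by (rule L.F_deriv[OF s])
  moreover have "L.F = Fk J" by (intro ext) (simp add: L.F_def Fk_def)
  ultimately show ?thesis by simp
qed

lemma Fk_bound: "finite J \<Longrightarrow> s > 0 \<Longrightarrow> \<bar>Fk J k s\<bar> \<le> fact k / s ^ k"
proof -
  assume J: "finite J" and s: "s > 0"
  interpret prob_space "Q J" by (rule prob_Q)
  show ?thesis using lap_setup.F_bound[OF lap[OF J] s, of k]
    unfolding Fk_def lap_setup.F_def[OF lap[OF J]] by (simp add: prob_space)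
qed

lemma Fk0:
  assumes J: "finite J" and s: "s \<ge> 0"
  shows "Fk J 0 s = Phi (card J) s"
proof -
  have "Fk J 0 s = (\<integral>\<omega>. exp (- s * IJ J \<omega>) \<partial>Q J)" by (simp add: Fk_def)
  also have "\<dots> = Phi (card J) s" by (rule prod_formula[OF J s])
  finally show ?thesis .
qed

lemma Fk_Phi:
  assumes J: "finite J" and s: "s > 0"
  shows "(deriv ^^ k) (Phi (card J)) s = (-1) ^ k * Fk J k s"
proof (rule deriv_funpow_eq[where f="Fk J" and g="Phi (card J)"])
  show "\<And>k s. 0 < s \<Longrightarrow> (Fk J k has_real_derivative - Fk J (Suc k) s) (at s)"
    using J by (rule Fk_deriv)
  show "\<And>s. 0 < s \<Longrightarrow> Phi (card J) s = Fk J 0 s"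
    using J Fk0 by simp
  show "0 < s" by (rule s)
qed

definition pp :: "real \<Rightarrow> nat \<Rightarrow> real" where
  "pp \<Lambda> n = exp (- \<Lambda>) * \<Lambda> ^ n / fact n"

definition S :: "real \<Rightarrow> nat \<Rightarrow> real \<Rightarrow> real" where
  "S \<Lambda> k s = (\<Sum>n. pp \<Lambda> n * Fk {..<n} k s)"

lemma pp_nonneg: "\<Lambda> \<ge> 0 \<Longrightarrow> pp \<Lambda> n \<ge> 0"
  unfolding pp_def by simp

lemma pp_sums: "(\<lambda>n. pp \<Lambda> n) sums 1"
proof -
  have "(\<lambda>n. exp (- \<Lambda>) * (\<Lambda> ^ n /\<^sub>R fact n)) sums (exp (- \<Lambda>) * exp \<Lambda>)"
    by (intro sums_mult exp_converges)
  then show ?thesis by (simp add: pp_def exp_minus field_simps)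
qed

lemma pp_summable: "\<Lambda> \<ge> 0 \<Longrightarrow> summable (\<lambda>n. \<bar>pp \<Lambda> n\<bar>)"
  using pp_sums[of \<Lambda>] pp_nonneg[of \<Lambda>] by (simp add: sums_iff)

lemma S_props:
  assumes L: "\<Lambda> \<ge> 0" and s: "s > 0"
  shows "summable (\<lambda>n. pp \<Lambda> n * Fk {..<n} k s)"
    "(S \<Lambda> k has_real_derivative - S \<Lambda> (Suc k) s) (at s)"
proof -
  have D: "\<And>n k s. s > 0 \<Longrightarrow> (Fk {..<n} k has_real_derivative - Fk {..<n} (Suc k) s) (at s)"
    by (rule Fk_deriv) auto
  have B: "\<And>n k s. s > 0 \<Longrightarrow> \<bar>Fk {..<n} k s\<bar> \<le> fact k / s ^ k"
    by (rule Fk_bound) auto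
  have Bm: "\<And>k s t. 0 < t \<Longrightarrow> t \<le> s \<Longrightarrow> fact k / s ^ k \<le> (fact k / t ^ k :: real)"
    by (intro divide_left_mono power_mono mult_pos_pos) auto
  note sd = series_deriv[where f="\<lambda>n. Fk {..<n}" and B="\<lambda>k s. fact k / s ^ k", OF D B Bm pp_summable[OF L] s]
  show "summable (\<lambda>n. pp \<Lambda> n * Fk {..<n} k s)" by (rule sd(1))
  have "((\<lambda>s. \<Sum>n. pp \<Lambda> n * Fk {..<n} k s) has_real_derivative - (\<Sum>n. pp \<Lambda> n * Fk {..<n} (Suc k) s)) (at s)"
    by (rule sd(2))
  then show "(S \<Lambda> k has_real_derivative - S \<Lambda> (Suc k) s) (at s)"
    unfolding S_def[abs_def] by simp
qed

lemma lapI_S: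
  assumes s: "s \<ge> 0"
  shows "laplace_I a lam h d \<eta> m P \<sigma>2 s = S (a * lam * pi * R\<^sup>2) 0 s"
proof -
  have "(\<lambda>n. pp (a * lam * pi * R\<^sup>2) n * Fk {..<n} 0 s) = (\<lambda>n. exp (- (a * lam * pi * R\<^sup>2)) * (a * lam * pi * R\<^sup>2) ^ n / fact n * Phi n s)"
    using s by (simp add: Fk0 pp_def)
  then show ?thesis unfolding S_def using part1[OF s, of a lam] by (simp add: sums_iff)
qed

lemma deriv_lapI:
  assumes L: "a * lam * pi * R\<^sup>2 \<ge> 0" and s: "s > 0"
  shows "(deriv ^^ k) (laplace_I a lam h d \<eta> m P \<sigma>2) s = (-1) ^ k * S (a * lam * pi * R\<^sup>2) k s"
proof (rule deriv_funpow_eq[where f="S (a * lam * pi * R\<^sup>2)"])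
  show "\<And>k s. 0 < s \<Longrightarrow> (S (a * lam * pi * R\<^sup>2) k has_real_derivative - S (a * lam * pi * R\<^sup>2) (Suc k) s) (at s)"
    by (rule S_props(2)[OF L])
  show "\<And>s. 0 < s \<Longrightarrow> laplace_I a lam h d \<eta> m P \<sigma>2 s = S (a * lam * pi * R\<^sup>2) 0 s"
    by (rule lapI_S) simp
  show "0 < s" by (rule s)
qed

end



context sysm begin

lemma sinr_meas:
  assumes i: "i < n"
  shows "(\<lambda>\<omega>. sinr c h \<eta> P \<sigma>2 n \<omega> i) \<in> borel_measurable (Q {..<n})"
proof -
  have ci: "(\<lambda>\<omega>. \<omega> i) \<in> Q {..<n} \<rightarrow>\<^sub>M \<mu>" using i by (intro measurable_component_singleton) auto
  have g: "(\<lambda>x. P * snd x * uav_dist c h (fst x) powr - \<eta>) \<in> borel_measurable \<mu>" by measurable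
  have s: "(\<lambda>\<omega>. \<Sum>j\<in>{..<n} - {i}. P * snd (\<omega> j) * uav_dist c h (fst (\<omega> j)) powr - \<eta>) \<in> borel_measurable (Q {..<n})"
  proof (rule borel_measurable_sum)
    fix j assume "j \<in> {..<n} - {i}"
    then have cj: "(\<lambda>\<omega>. \<omega> j) \<in> Q {..<n} \<rightarrow>\<^sub>M \<mu>" by (intro measurable_component_singleton) auto
    show "(\<lambda>\<omega>. P * snd (\<omega> j) * uav_dist c h (fst (\<omega> j)) powr - \<eta>) \<in> borel_measurable (Q {..<n})"
      by (rule measurable_compose[OF cj g])
  qed
  show ?thesis unfolding sinr_def
    by (intro borel_measurable_divide borel_measurable_add s borel_measurable_const measurable_compose[OF ci g])
qed

lemma sinr_upd:
  assumes J: "J = {..<n} - {i}" and good: "\<forall>j\<in>J. snd (X j) > 0"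
  shows "(\<beta> \<le> sinr c h \<eta> P \<sigma>2 n (X(i := x)) i) \<longleftrightarrow> \<beta> * IJ J X * uav_dist c h (fst x) powr \<eta> \<le> snd x"
proof -
  let ?D = "uav_dist c h (fst x)"
  have Dp: "?D > 0" by (rule uav_dist_pos[OF h])
  have Ip: "IJ J X > 0"
  proof -
    have "(\<Sum>j\<in>J. Yf (X j)) \<ge> 0" using good by (intro sum_nonneg Yf_nonneg) auto
    then show ?thesis unfolding IJ_def using P sig by (simp add: add_nonneg_pos)
  qed
  have den: "(\<Sum>j\<in>{..<n} - {i}. P * snd ((X(i := x)) j) * uav_dist c h (fst ((X(i := x)) j)) powr - \<eta>) + \<sigma>2
        = P * IJ J X"
    unfolding IJ_def J Yf_def using P
    by (simp add: sum_distrib_left distrib_left mult.assoc)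
  have "sinr c h \<eta> P \<sigma>2 n (X(i := x)) i = snd x * ?D powr - \<eta> / IJ J X"
    unfolding sinr_def den using P by simp
  also have "\<dots> = snd x / (IJ J X * ?D powr \<eta>)"
    using Dp by (simp add: powr_minus divide_inverse)
  finally have e: "sinr c h \<eta> P \<sigma>2 n (X(i := x)) i = snd x / (IJ J X * ?D powr \<eta>)" .
  have pos: "IJ J X * ?D powr \<eta> > 0" using Ip Dp by simp
  show ?thesis unfolding e using pos by (simp add: le_divide_eq mult.assoc)
qed

abbreviation "U \<equiv> uniform_measure lborel (cball c R)"

definition sf :: "real \<Rightarrow> real \<times> real \<Rightarrow> real" where
  "sf \<beta> y = real m * \<beta> * uav_dist c h y powr \<eta>"

lemma sf_pos: "\<beta> > 0 \<Longrightarrow> sf \<beta> y > 0"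
proof -
  assume b: "\<beta> > 0"
  have "uav_dist c h y > 0" by (rule uav_dist_pos[OF h])
  then have "uav_dist c h y powr \<eta> > 0" by simp
  then show ?thesis unfolding sf_def using m b by simp
qed

definition Hk :: "nat set \<Rightarrow> real \<Rightarrow> real \<times> real \<Rightarrow> (nat \<Rightarrow> (real \<times> real) \<times> real) \<Rightarrow> real" where
  "Hk J \<beta> y X = (\<Sum>k<m. sf \<beta> y ^ k / fact k * (IJ J X ^ k * exp (- sf \<beta> y * IJ J X)))"

lemma sf_meas[measurable]: "sf \<beta> \<in> borel_measurable borel"
  unfolding sf_def by measurable

lemma Hk_meas[measurable]: "(\<lambda>(y, X). Hk J \<beta> y X) \<in> borel_measurable (U \<Otimes>\<^sub>M Q J)"
  unfolding Hk_def by measurable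

lemma Hk_bound:
  assumes "\<beta> > 0" "IJ J X \<ge> 0"
  shows "\<bar>Hk J \<beta> y X\<bar> \<le> real m"
proof -
  have "\<bar>Hk J \<beta> y X\<bar> \<le> (\<Sum>k<m. \<bar>sf \<beta> y ^ k / fact k * (IJ J X ^ k * exp (- sf \<beta> y * IJ J X))\<bar>)"
    unfolding Hk_def by (rule sum_abs)
  also have "\<dots> \<le> (\<Sum>k<m. 1)"
  proof (rule sum_mono)
    fix k
    let ?z = "sf \<beta> y * IJ J X"
    have z: "?z \<ge> 0" using sf_pos[OF assms(1), of y] assms(2) by simp
    have "sf \<beta> y ^ k / fact k * (IJ J X ^ k * exp (- sf \<beta> y * IJ J X)) = ?z ^ k * exp (- 1 * ?z) / fact k"
      by (simp add: power_mult_distrib)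
    also have "\<dots> \<le> 1" using pow_exp_bound[OF z, of 1 k] by simp
    finally have "sf \<beta> y ^ k / fact k * (IJ J X ^ k * exp (- sf \<beta> y * IJ J X)) \<le> 1" .
    moreover have "sf \<beta> y ^ k / fact k * (IJ J X ^ k * exp (- sf \<beta> y * IJ J X)) \<ge> 0"
      using sf_pos[OF assms(1), of y] assms(2) by simp
    ultimately show "\<bar>sf \<beta> y ^ k / fact k * (IJ J X ^ k * exp (- sf \<beta> y * IJ J X))\<bar> \<le> 1"
      by (simp only: abs_of_nonneg)
  qed
  finally show ?thesis by simp
qed

end



context sysm begin

lemma inner_mu:
  assumes b: "\<beta> > 0" and IJp: "IJ J X \<ge> 0"
  shows "(\<integral>x. (if \<beta> * IJ J X * uav_dist c h (fst x) powr \<eta> \<le> snd x then 1 else 0::real) \<partial>\<mu>)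
       = (\<integral>y. Hk J \<beta> y X \<partial>U)"
proof -
  let ?G = "gain_dist m"
  let ?T = "\<lambda>y. \<beta> * IJ J X * uav_dist c h y powr \<eta>"
  interpret Uu: prob_space U using prob_space_disk[OF R] .
  interpret G: prob_space ?G using prob_space_gain[OF m] .
  interpret UG: pair_prob_space U ?G ..
  have int: "integrable (U \<Otimes>\<^sub>M ?G) (\<lambda>x. if ?T (fst x) \<le> snd x then 1 else 0::real)"
    by (rule UG.integrable_const_bound[where B=1]) auto
  have "(\<integral>x. (if ?T (fst x) \<le> snd x then 1 else 0::real) \<partial>\<mu>)
      = (\<integral>y. (\<integral>g. (if ?T y \<le> g then 1 else 0::real) \<partial>?G) \<partial>U)"
    unfolding mark_dist_def using UG.integral_fst'[OF int] by simp
  also have "\<dots> = (\<integral>y. Hk J \<beta> y X \<partial>U)"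
  proof (intro Bochner_Integration.integral_cong refl)
    fix y
    have T0: "?T y \<ge> 0" using b IJp by simp
    have "(\<integral>g. (if ?T y \<le> g then 1 else 0::real) \<partial>?G) = (\<integral>g. indicator {g. ?T y \<le> g} g \<partial>?G)"
      by (intro Bochner_Integration.integral_cong) (auto simp: indicator_def)
    also have "\<dots> = measure ?G {g. ?T y \<le> g}"
      by (simp add: gain_dist_def)
    also have "\<dots> = (\<Sum>k<m. (real m * ?T y) ^ k * exp (- real m * ?T y) / fact k)"
      by (rule gamma_tail[OF m T0])
    also have "\<dots> = Hk J \<beta> y X"
      unfolding Hk_def sf_def
      by (intro sum.cong refl) (simp add: power_mult_distrib field_simps)
    finally show "(\<integral>g. (if ?T y \<le> g then 1 else 0::real) \<partial>?G) = Hk J \<beta> y X" .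
  qed
  finally show ?thesis .
qed

lemma inner_Q:
  assumes b: "\<beta> > 0" and J: "finite J"
  shows "(\<integral>X. Hk J \<beta> y X \<partial>Q J) = (\<Sum>k<m. sf \<beta> y ^ k / fact k * Fk J k (sf \<beta> y))"
proof -
  interpret L: lap_setup "Q J" "IJ J" by (rule lap[OF J])
  have s: "sf \<beta> y > 0" by (rule sf_pos[OF b])
  have "(\<integral>X. Hk J \<beta> y X \<partial>Q J) = (\<Sum>k<m. (\<integral>X. sf \<beta> y ^ k / fact k * (IJ J X ^ k * exp (- sf \<beta> y * IJ J X)) \<partial>Q J))"
    unfolding Hk_def
    by (rule Bochner_Integration.integral_sum) (intro integrable_mult_right L.integrable_F[OF s])
  also have "\<dots> = (\<Sum>k<m. sf \<beta> y ^ k / fact k * Fk J k (sf \<beta> y))"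
    by (simp add: Fk_def)
  finally show ?thesis .
qed

lemma ind_decomp:
  assumes i: "i < n" and b: "\<beta> > 0"
  shows "(\<integral>\<omega>. (if \<beta> \<le> sinr c h \<eta> P \<sigma>2 n \<omega> i then 1 else 0::real) \<partial>Q {..<n})
       = (\<integral>y. (\<Sum>k<m. sf \<beta> y ^ k / fact k * Fk ({..<n} - {i}) k (sf \<beta> y)) \<partial>U)"
proof -
  define J where "J = {..<n} - {i}"
  have fJ: "finite J" by (simp add: J_def)
  have ins: "insert i J = {..<n}" using i by (auto simp: J_def)
  let ?f = "\<lambda>\<omega>. if \<beta> \<le> sinr c h \<eta> P \<sigma>2 n \<omega> i then 1 else 0::real"
  have [measurable]: "(\<lambda>\<omega>. sinr c h \<eta> P \<sigma>2 n \<omega> i) \<in> borel_measurable (Q {..<n})"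
    by (rule sinr_meas[OF i])
  have fm[measurable]: "?f \<in> borel_measurable (Q {..<n})" by measurable
  interpret Mu: prob_space \<mu> by (rule prob_mu)
  interpret QJ: prob_space "Q J" by (rule prob_Q)
  interpret Uu: prob_space U using prob_space_disk[OF R] .
  interpret MQ: pair_prob_space \<mu> "Q J" ..
  interpret UQ: pair_prob_space U "Q J" ..
  have upd[measurable]: "(\<lambda>(x, X). X(i := x)) \<in> \<mu> \<Otimes>\<^sub>M Q J \<rightarrow>\<^sub>M Q {..<n}"
  proof -
    have "(\<lambda>(x, X). X(i := x)) = (\<lambda>(f, y). f(i := y)) \<circ> (\<lambda>(x, y). (y, x))"
      by (auto simp: fun_eq_iff)
    moreover have "(\<lambda>(f, y). f(i := y)) \<circ> (\<lambda>(x, y). (y, x)) \<in> \<mu> \<Otimes>\<^sub>M Q J \<rightarrow>\<^sub>M Q (insert i J)"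
      using measurable_comp[OF measurable_pair_swap' measurable_add_dim[of i J "\<lambda>_. \<mu>"]] by simp
    ultimately show ?thesis using ins by metis
  qed
  have distr: "distr (\<mu> \<Otimes>\<^sub>M Q J) (Q {..<n}) (\<lambda>(x, X). X(i := x)) = Q {..<n}"
    using distr_pair_PiM_eq_PiM[of J "\<lambda>_. \<mu>" i] prob_mu ins by simp
  let ?F2 = "\<lambda>z. if \<beta> * IJ J (snd z) * uav_dist c h (fst (fst z)) powr \<eta> \<le> snd (fst z) then 1 else 0::real"
  have F2m[measurable]: "?F2 \<in> borel_measurable (\<mu> \<Otimes>\<^sub>M Q J)" by measurable
  have "(\<integral>\<omega>. ?f \<omega> \<partial>Q {..<n}) = (\<integral>z. ?f (case z of (x, X) \<Rightarrow> X(i := x)) \<partial>(\<mu> \<Otimes>\<^sub>M Q J))"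
    by (subst distr[symmetric], subst integral_distr[OF upd fm]) simp
  also have "\<dots> = (\<integral>z. ?F2 z \<partial>(\<mu> \<Otimes>\<^sub>M Q J))"
  proof (rule integral_cong_AE)
    show "(\<lambda>z. ?f (case z of (x, X) \<Rightarrow> X(i := x))) \<in> borel_measurable (\<mu> \<Otimes>\<^sub>M Q J)" by measurable
    show "?F2 \<in> borel_measurable (\<mu> \<Otimes>\<^sub>M Q J)" by measurable
    have S: "{z \<in> space (\<mu> \<Otimes>\<^sub>M Q J). ?f (case z of (x, X) \<Rightarrow> X(i := x)) = ?F2 z} \<in> sets (\<mu> \<Otimes>\<^sub>M Q J)"
      by measurable
    have A: "AE x in \<mu>. AE X in Q J. ?f (X(i := x)) = ?F2 (x, X)"
    proof (rule AE_I2, rule AE_mp[OF AE_Q[OF fJ]], rule AE_I2, intro impI)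
      fix x :: "(real \<times> real) \<times> real" and X :: "nat \<Rightarrow> (real \<times> real) \<times> real"
      assume g: "\<forall>j\<in>J. 0 < snd (X j) \<and> fst (X j) \<in> cball c R"
      show "?f (X(i := x)) = ?F2 (x, X)"
        using sinr_upd[OF J_def, of X \<beta> x] g by simp
    qed
    have "AE z in \<mu> \<Otimes>\<^sub>M Q J. ?f (case z of (x, X) \<Rightarrow> X(i := x)) = ?F2 z"
      using MQ.AE_pair_measure[OF S] A by simp
    then show "AE z in \<mu> \<Otimes>\<^sub>M Q J. ?f (case z of (x, X) \<Rightarrow> X(i := x)) = ?F2 z" .
  qed
  also have "\<dots> = (\<integral>X. (\<integral>x. ?F2 (x, X) \<partial>\<mu>) \<partial>Q J)"
  proof -
    have "integrable (\<mu> \<Otimes>\<^sub>M Q J) (case_prod (\<lambda>x X. ?F2 (x, X)))"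
      by (rule MQ.integrable_const_bound[where B=1]) auto
    from MQ.integral_snd[OF this] show ?thesis by (simp add: split_beta')
  qed
  also have "\<dots> = (\<integral>X. (\<integral>y. Hk J \<beta> y X \<partial>U) \<partial>Q J)"
  proof (rule integral_cong_AE)
    show "(\<lambda>X. \<integral>x. ?F2 (x, X) \<partial>\<mu>) \<in> borel_measurable (Q J)" by measurable
    show "(\<lambda>X. \<integral>y. Hk J \<beta> y X \<partial>U) \<in> borel_measurable (Q J)" by measurable
    show "AE X in Q J. (\<integral>x. ?F2 (x, X) \<partial>\<mu>) = (\<integral>y. Hk J \<beta> y X \<partial>U)"
      using IJ_pos[OF fJ]
    proof eventually_elim
      case (elim X)
      then have "IJ J X \<ge> 0" using P sig by (meson less_le_trans divide_pos_pos less_imp_le)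
      then show ?case using inner_mu[OF b] by simp
    qed
  qed
  also have "\<dots> = (\<integral>y. (\<integral>X. Hk J \<beta> y X \<partial>Q J) \<partial>U)"
  proof -
    have int: "integrable (U \<Otimes>\<^sub>M Q J) (case_prod (\<lambda>y X. Hk J \<beta> y X))"
    proof (rule UQ.integrable_const_bound[where B="real m"])
      show "AE z in U \<Otimes>\<^sub>M Q J. norm (case z of (y, X) \<Rightarrow> Hk J \<beta> y X) \<le> real m"
      proof (rule UQ.AE_pair_measure)
        show "{z \<in> space (U \<Otimes>\<^sub>M Q J). norm (case z of (y, X) \<Rightarrow> Hk J \<beta> y X) \<le> real m} \<in> sets (U \<Otimes>\<^sub>M Q J)"
          by measurable
        show "AE y in U. AE X in Q J. norm (case (y, X) of (y, X) \<Rightarrow> Hk J \<beta> y X) \<le> real m"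
        proof (rule AE_I2)
          fix y
          show "AE X in Q J. norm (case (y, X) of (y, X) \<Rightarrow> Hk J \<beta> y X) \<le> real m"
            using IJ_pos[OF fJ]
          proof eventually_elim
            case (elim X)
            then have "IJ J X \<ge> 0" using P sig by (meson less_le_trans divide_pos_pos less_imp_le)
            then show ?case using Hk_bound[OF b] by simp
          qed
        qed
      qed
    qed simp
    show ?thesis using UQ.integral_fst[OF int] UQ.integral_snd[OF int] by simp
  qed
  also have "\<dots> = (\<integral>y. (\<Sum>k<m. sf \<beta> y ^ k / fact k * Fk J k (sf \<beta> y)) \<partial>U)"
    by (intro Bochner_Integration.integral_cong refl inner_Q[OF b fJ])
  finally show ?thesis unfolding J_def .
qed

end



context sysm begin

lemma config_Q: "config_dist c R m n = Q {..<n}"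
  unfolding config_dist_def ..

lemma part1_expect:
  assumes s: "s \<ge> 0"
  shows "ppp_expect a lam c R m
        (\<lambda>n \<omega>. exp (- s * ((\<Sum>i<n. snd (\<omega> i) * uav_dist c h (fst (\<omega> i)) powr (- \<eta>)) + \<sigma>2 / P)))
      = laplace_I a lam h d \<eta> m P \<sigma>2 s"
proof -
  have e: "integral\<^sup>L (config_dist c R m n)
          (\<lambda>\<omega>. exp (- s * ((\<Sum>i<n. snd (\<omega> i) * uav_dist c h (fst (\<omega> i)) powr (- \<eta>)) + \<sigma>2 / P)))
        = Phi n s" for n
  proof -
    have "(\<lambda>\<omega>. exp (- s * ((\<Sum>i<n. snd (\<omega> i) * uav_dist c h (fst (\<omega> i)) powr (- \<eta>)) + \<sigma>2 / P)))
        = (\<lambda>\<omega>. exp (- s * IJ {..<n} \<omega>))"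
      by (simp add: IJ_def Yf_def)
    then have "integral\<^sup>L (config_dist c R m n)
          (\<lambda>\<omega>. exp (- s * ((\<Sum>i<n. snd (\<omega> i) * uav_dist c h (fst (\<omega> i)) powr (- \<eta>)) + \<sigma>2 / P)))
        = (\<integral>\<omega>. exp (- s * IJ {..<n} \<omega>) \<partial>Q {..<n})"
      by (simp only: config_Q)
    also have "\<dots> = Phi (card {..<n}) s" by (rule prod_formula) (auto simp: s)
    finally show ?thesis by simp
  qed
  have "(\<lambda>n. exp (- (a * lam * pi * R\<^sup>2)) * (a * lam * pi * R\<^sup>2) ^ n / fact n * Phi n s) sums laplace_I a lam h d \<eta> m P \<sigma>2 s"
    by (rule part1[OF s])
  then show ?thesis
    unfolding ppp_expect_def Let_def e by (rule sums_unique[symmetric])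
qed

lemma sinr_unique:
  assumes b: "\<beta> \<ge> 1" and g: "\<forall>j<n. snd (\<omega> j) > 0"
    and i: "i < n" and j: "j < n" and si: "\<beta> \<le> sinr c h \<eta> P \<sigma>2 n \<omega> i" and sj: "\<beta> \<le> sinr c h \<eta> P \<sigma>2 n \<omega> j"
  shows "i = j"
proof (rule ccontr)
  assume ij: "i \<noteq> j"
  define S where "S k = P * snd (\<omega> k) * uav_dist c h (fst (\<omega> k)) powr - \<eta>" for k
  have Sp: "S k \<ge> 0" if "k < n" for k
    using g that P unfolding S_def by (auto intro!: mult_nonneg_nonneg)
  have key: "S a \<ge> S b + \<sigma>2" if ab: "a < n" "b < n" "a \<noteq> b" and sa: "\<beta> \<le> sinr c h \<eta> P \<sigma>2 n \<omega> a" for a b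
  proof -
    let ?den = "(\<Sum>k\<in>{..<n} - {a}. S k) + \<sigma>2"
    have "S b \<le> (\<Sum>k\<in>{..<n} - {a}. S k)"
      using ab Sp by (intro member_le_sum) auto
    then have dge: "?den \<ge> S b + \<sigma>2" by simp
    have dpos: "?den > 0" using dge Sp[of b] ab sig by linarith
    have "sinr c h \<eta> P \<sigma>2 n \<omega> a = S a / ?den" unfolding sinr_def S_def by simp
    then have "1 \<le> S a / ?den" using sa b by linarith
    then have "?den \<le> S a" using dpos by (simp add: le_divide_eq)
    then show ?thesis using dge by linarith
  qed
  have "S i \<ge> S j + \<sigma>2" using key[OF i j ij si] .
  moreover have "S j \<ge> S i + \<sigma>2" using key[OF j i ij[symmetric] sj] .
  ultimately show False using sig by linarith
qed

lemma part2_term: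
  assumes b: "\<beta> \<ge> 1"
  shows "measure (config_dist c R m n) {\<omega> \<in> space (config_dist c R m n). \<exists>i<n. \<beta> \<le> sinr c h \<eta> P \<sigma>2 n \<omega> i}
       = integral\<^sup>L (config_dist c R m n) (\<lambda>\<omega>. real (card {i. i < n \<and> \<beta> \<le> sinr c h \<eta> P \<sigma>2 n \<omega> i}))"
proof -
  interpret Qn: prob_space "Q {..<n}" by (rule prob_Q)
  let ?A = "{\<omega> \<in> space (Q {..<n}). \<exists>i<n. \<beta> \<le> sinr c h \<eta> P \<sigma>2 n \<omega> i}"
  have sets_i: "{\<omega> \<in> space (Q {..<n}). \<beta> \<le> sinr c h \<eta> P \<sigma>2 n \<omega> i} \<in> sets (Q {..<n})" if "i < n" for i
  proof -
    have [measurable]: "(\<lambda>\<omega>. sinr c h \<eta> P \<sigma>2 n \<omega> i) \<in> borel_measurable (Q {..<n})"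
      by (rule sinr_meas[OF that])
    show ?thesis by measurable
  qed
  have A_eq: "?A = (\<Union>i\<in>{..<n}. {\<omega> \<in> space (Q {..<n}). \<beta> \<le> sinr c h \<eta> P \<sigma>2 n \<omega> i})" by blast
  have A: "?A \<in> sets (Q {..<n})" unfolding A_eq by (intro sets.finite_UN sets_i) (simp_all only: finite_lessThan lessThan_iff)
  have card_eq: "real (card {i. i < n \<and> \<beta> \<le> sinr c h \<eta> P \<sigma>2 n \<omega> i})
      = (\<Sum>i<n. if \<beta> \<le> sinr c h \<eta> P \<sigma>2 n \<omega> i then 1 else 0)" for \<omega>
  proof -
    have "{i. i < n \<and> \<beta> \<le> sinr c h \<eta> P \<sigma>2 n \<omega> i} = {i \<in> {..<n}. \<beta> \<le> sinr c h \<eta> P \<sigma>2 n \<omega> i}" by blast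
    then have "real (card {i. i < n \<and> \<beta> \<le> sinr c h \<eta> P \<sigma>2 n \<omega> i})
        = (\<Sum>i\<in>{i \<in> {..<n}. \<beta> \<le> sinr c h \<eta> P \<sigma>2 n \<omega> i}. 1)"
      by (simp only: real_of_card)
    also have "\<dots> = (\<Sum>i<n. if \<beta> \<le> sinr c h \<eta> P \<sigma>2 n \<omega> i then 1 else 0)"
      by (rule sum.inter_filter) simp
    finally show ?thesis .
  qed
  have cm: "(\<lambda>\<omega>. real (card {i. i < n \<and> \<beta> \<le> sinr c h \<eta> P \<sigma>2 n \<omega> i})) \<in> borel_measurable (Q {..<n})"
    unfolding card_eq
  proof (rule borel_measurable_sum)
    fix i assume "i \<in> {..<n}"
    then have [measurable]: "(\<lambda>\<omega>. sinr c h \<eta> P \<sigma>2 n \<omega> i) \<in> borel_measurable (Q {..<n})"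
      by (intro sinr_meas) auto
    show "(\<lambda>\<omega>. if \<beta> \<le> sinr c h \<eta> P \<sigma>2 n \<omega> i then 1 else 0::real) \<in> borel_measurable (Q {..<n})"
      by measurable
  qed
  have "integral\<^sup>L (Q {..<n}) (\<lambda>\<omega>. real (card {i. i < n \<and> \<beta> \<le> sinr c h \<eta> P \<sigma>2 n \<omega> i}))
      = integral\<^sup>L (Q {..<n}) (indicator ?A)"
  proof (rule integral_cong_AE)
    show "(\<lambda>\<omega>. real (card {i. i < n \<and> \<beta> \<le> sinr c h \<eta> P \<sigma>2 n \<omega> i})) \<in> borel_measurable (Q {..<n})" by (rule cm)
    show "(indicator ?A :: _ \<Rightarrow> real) \<in> borel_measurable (Q {..<n})" by (rule borel_measurable_indicator[OF A])
    show "AE \<omega> in Q {..<n}. real (card {i. i < n \<and> \<beta> \<le> sinr c h \<eta> P \<sigma>2 n \<omega> i}) = indicator ?A \<omega>"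
      using AE_Q[OF finite_lessThan[of n]] AE_space
    proof eventually_elim
      case (elim \<omega>)
      have g: "\<forall>j<n. snd (\<omega> j) > 0" using elim(1) by blast
      let ?C = "{i. i < n \<and> \<beta> \<le> sinr c h \<eta> P \<sigma>2 n \<omega> i}"
      show ?case
      proof (cases "\<exists>i<n. \<beta> \<le> sinr c h \<eta> P \<sigma>2 n \<omega> i")
        case True
        then obtain i where i: "i < n" "\<beta> \<le> sinr c h \<eta> P \<sigma>2 n \<omega> i" by blast
        have "?C = {i}" using sinr_unique[OF b g] i by blast
        moreover have "\<omega> \<in> ?A" using elim(2) True by blast
        ultimately show ?thesis by (simp only: indicator_simps card_1_singleton_iff) simp
      next
        case False
        then have "?C = {}" by blast
        moreover have "\<omega> \<notin> ?A" using False by blast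
        ultimately show ?thesis by (simp only: indicator_simps) simp
      qed
    qed
  qed
  also have "\<dots> = measure (Q {..<n}) (?A \<inter> space (Q {..<n}))" by (rule Bochner_Integration.integral_indicator)
  also have "?A \<inter> space (Q {..<n}) = ?A" by blast
  finally show ?thesis unfolding config_Q by (rule sym)
qed

end



context sysm begin

lemma Fk_card:
  assumes "finite J" "finite J'" "card J = card J'" "s > 0"
  shows "Fk J k s = Fk J' k s"
proof -
  have "(deriv ^^ k) (Phi (card J)) s = (-1) ^ k * Fk J k s" by (rule Fk_Phi[OF assms(1,4)])
  moreover have "(deriv ^^ k) (Phi (card J')) s = (-1) ^ k * Fk J' k s" by (rule Fk_Phi[OF assms(2,4)])
  ultimately have "(-1) ^ k * Fk J k s = (-1) ^ k * Fk J' k s" using assms(3) by simp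
  then show ?thesis by simp
qed

lemma Fk_cont: "finite J \<Longrightarrow> continuous_on {0<..} (Fk J k)"
  by (intro continuous_at_imp_continuous_on ballI DERIV_isCont[OF Fk_deriv]) auto

lemma deriv_lapI_DERIV:
  assumes L: "a * lam * pi * R\<^sup>2 \<ge> 0" and s: "s > 0"
  shows "((deriv ^^ k) (laplace_I a lam h d \<eta> m P \<sigma>2) has_real_derivative
          (-1) ^ k * (- S (a * lam * pi * R\<^sup>2) (Suc k) s)) (at s)"
proof -
  let ?L = "laplace_I a lam h d \<eta> m P \<sigma>2" and ?\<Lambda> = "a * lam * pi * R\<^sup>2"
  have ev: "eventually (\<lambda>x. (deriv ^^ k) ?L x = (-1) ^ k * S ?\<Lambda> k x) (nhds s)"
    using eventually_nhds_in_open[of "{0<..}" s] s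
    by (auto elim!: eventually_mono intro: deriv_lapI[OF L])
  have "((\<lambda>x. (-1) ^ k * S ?\<Lambda> k x) has_real_derivative (-1) ^ k * (- S ?\<Lambda> (Suc k) s)) (at s)"
    by (rule DERIV_cmult[OF S_props(2)[OF L s]])
  then show ?thesis by (subst DERIV_cong_ev[OF refl ev refl])
qed

lemma deriv_lapI_cont:
  assumes L: "a * lam * pi * R\<^sup>2 \<ge> 0"
  shows "continuous_on {0<..} ((deriv ^^ k) (laplace_I a lam h d \<eta> m P \<sigma>2))"
  by (intro continuous_at_imp_continuous_on ballI DERIV_isCont[OF deriv_lapI_DERIV[OF L]]) auto

definition Gf :: "real \<Rightarrow> real \<Rightarrow> real \<Rightarrow> real \<Rightarrow> real" where
  "Gf a lam \<beta> r = (\<Sum>k<m. (- real m * \<beta> * r powr \<eta>) ^ k / fact k *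
              (deriv ^^ k) (laplace_I a lam h d \<eta> m P \<sigma>2) (real m * \<beta> * r powr \<eta>))"

lemma Gf_cont:
  assumes L: "a * lam * pi * R\<^sup>2 \<ge> 0" and b: "\<beta> > 0"
  shows "continuous_on {0<..} (Gf a lam \<beta>)"
proof -
  have inner: "continuous_on {0<..} (\<lambda>r. real m * \<beta> * r powr \<eta>)"
    by (intro continuous_intros) auto
  have img: "(\<lambda>r. real m * \<beta> * r powr \<eta>) ` {0<..} \<subseteq> {0<..}"
    using m b by auto
  have c: "continuous_on {0<..} (\<lambda>r. (deriv ^^ k) (laplace_I a lam h d \<eta> m P \<sigma>2) (real m * \<beta> * r powr \<eta>))" for k
    by (rule continuous_on_compose2[OF deriv_lapI_cont[OF L] inner img])
  show ?thesis unfolding Gf_def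
    by (intro continuous_intros c) auto
qed

end



lemma card_sum: fixes n :: nat shows "real (card {i. i < n \<and> Pr i}) = (\<Sum>i<n. if Pr i then 1 else 0)"
proof -
  have "{i. i < n \<and> Pr i} = {i \<in> {..<n}. Pr i}" by blast
  then have "real (card {i. i < n \<and> Pr i}) = (\<Sum>i\<in>{i \<in> {..<n}. Pr i}. 1)"
    by (simp only: real_of_card)
  also have "\<dots> = (\<Sum>i<n. if Pr i then 1 else 0)"
    using sum.inter_filter[OF finite_lessThan[of n], of "\<lambda>_. 1::real" Pr] by simp
  finally show ?thesis .
qed

context sysm begin

lemma uav_cont: "continuous_on UNIV (uav_dist c h)"
  unfolding uav_dist_def by (intro continuous_intros)

lemma sf_cont: "continuous_on UNIV (sf \<beta>)"
proof -
  have ne: "\<forall>x\<in>UNIV. uav_dist c h x \<noteq> 0" using uav_dist_pos[OF h] by (simp add: less_imp_neq[symmetric])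
  show ?thesis unfolding sf_def using uav_cont ne by (intro continuous_intros) auto
qed

definition gj :: "real \<Rightarrow> nat \<Rightarrow> real \<times> real \<Rightarrow> real" where
  "gj \<beta> j y = (\<Sum>k<m. sf \<beta> y ^ k / fact k * Fk {..<j} k (sf \<beta> y))"

definition Aj :: "real \<Rightarrow> nat \<Rightarrow> real" where
  "Aj \<beta> j = (\<integral>y. gj \<beta> j y \<partial>U)"

lemma gj_meas: "\<beta> > 0 \<Longrightarrow> gj \<beta> j \<in> borel_measurable borel"
proof -
  assume b: "\<beta> > 0"
  have img: "sf \<beta> ` UNIV \<subseteq> {0<..}" using sf_pos[OF b] by auto
  have "continuous_on UNIV (\<lambda>y. Fk {..<j} k (sf \<beta> y))" for k
    by (rule continuous_on_compose2[OF Fk_cont sf_cont img]) simp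
  then have "continuous_on UNIV (gj \<beta> j)"
    unfolding gj_def by (intro continuous_intros sf_cont) (auto simp del: fact_Suc)
  then show ?thesis by (rule borel_measurable_continuous_onI)
qed

lemma gj_bound: "\<beta> > 0 \<Longrightarrow> \<bar>gj \<beta> j y\<bar> \<le> real m"
proof -
  assume b: "\<beta> > 0"
  have s: "sf \<beta> y > 0" by (rule sf_pos[OF b])
  have "\<bar>gj \<beta> j y\<bar> \<le> (\<Sum>k<m. \<bar>sf \<beta> y ^ k / fact k * Fk {..<j} k (sf \<beta> y)\<bar>)"
    unfolding gj_def by (rule sum_abs)
  also have "\<dots> \<le> (\<Sum>k<m. 1)"
  proof (rule sum_mono)
    fix k
    have "\<bar>sf \<beta> y ^ k / fact k * Fk {..<j} k (sf \<beta> y)\<bar> = sf \<beta> y ^ k / fact k * \<bar>Fk {..<j} k (sf \<beta> y)\<bar>"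
      using s by (simp add: abs_mult)
    also have "\<dots> \<le> sf \<beta> y ^ k / fact k * (fact k / sf \<beta> y ^ k)"
      using s by (intro mult_left_mono Fk_bound) auto
    also have "\<dots> = 1" using s by simp
    finally show "\<bar>sf \<beta> y ^ k / fact k * Fk {..<j} k (sf \<beta> y)\<bar> \<le> 1" .
  qed
  finally show ?thesis by simp
qed

lemma En:
  assumes b: "\<beta> > 0"
  shows "integral\<^sup>L (config_dist c R m n) (\<lambda>\<omega>. real (card {i. i < n \<and> \<beta> \<le> sinr c h \<eta> P \<sigma>2 n \<omega> i}))
       = real n * Aj \<beta> (n - 1)"
proof -
  interpret Qn: prob_space "Q {..<n}" by (rule prob_Q)
  have int: "integrable (Q {..<n}) (\<lambda>\<omega>. if \<beta> \<le> sinr c h \<eta> P \<sigma>2 n \<omega> i then 1 else 0::real)" if i: "i < n" for i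
  proof (rule Qn.integrable_const_bound[where B=1])
    have [measurable]: "(\<lambda>\<omega>. sinr c h \<eta> P \<sigma>2 n \<omega> i) \<in> borel_measurable (Q {..<n})"
      by (rule sinr_meas[OF i])
    show "(\<lambda>\<omega>. if \<beta> \<le> sinr c h \<eta> P \<sigma>2 n \<omega> i then 1 else 0::real) \<in> borel_measurable (Q {..<n})"
      by measurable
  qed simp
  have each: "(\<integral>\<omega>. (if \<beta> \<le> sinr c h \<eta> P \<sigma>2 n \<omega> i then 1 else 0::real) \<partial>Q {..<n}) = Aj \<beta> (n - 1)"
    if i: "i < n" for i
  proof -
    have "(\<integral>\<omega>. (if \<beta> \<le> sinr c h \<eta> P \<sigma>2 n \<omega> i then 1 else 0::real) \<partial>Q {..<n})
        = (\<integral>y. (\<Sum>k<m. sf \<beta> y ^ k / fact k * Fk ({..<n} - {i}) k (sf \<beta> y)) \<partial>U)"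
      by (rule ind_decomp[OF i b])
    also have "\<dots> = Aj \<beta> (n - 1)"
      unfolding Aj_def gj_def
    proof (intro Bochner_Integration.integral_cong refl sum.cong)
      fix y k
      have "card ({..<n} - {i}) = card {..<n - 1}" using i by simp
      then show "sf \<beta> y ^ k / fact k * Fk ({..<n} - {i}) k (sf \<beta> y) = sf \<beta> y ^ k / fact k * Fk {..<n - 1} k (sf \<beta> y)"
        using Fk_card[of "{..<n} - {i}" "{..<n - 1}" "sf \<beta> y" k] sf_pos[OF b, of y] by simp
    qed
    finally show ?thesis .
  qed
  have "integral\<^sup>L (Q {..<n}) (\<lambda>\<omega>. real (card {i. i < n \<and> \<beta> \<le> sinr c h \<eta> P \<sigma>2 n \<omega> i}))
      = (\<integral>\<omega>. (\<Sum>i<n. if \<beta> \<le> sinr c h \<eta> P \<sigma>2 n \<omega> i then 1 else 0::real) \<partial>Q {..<n})"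
    by (simp only: card_sum)
  also have "\<dots> = (\<Sum>i<n. (\<integral>\<omega>. (if \<beta> \<le> sinr c h \<eta> P \<sigma>2 n \<omega> i then 1 else 0::real) \<partial>Q {..<n}))"
    by (rule Bochner_Integration.integral_sum) (simp add: int)
  also have "\<dots> = (\<Sum>i<n. Aj \<beta> (n - 1))"
    by (rule sum.cong) (simp_all add: each)
  also have "\<dots> = real n * Aj \<beta> (n - 1)" by simp
  finally show ?thesis unfolding config_Q .
qed

end



context sysm begin

lemma Aj_bound:
  assumes b: "\<beta> > 0"
  shows "\<bar>Aj \<beta> j\<bar> \<le> real m" "integrable U (gj \<beta> j)"
proof -
  interpret Uu: prob_space U using prob_space_disk[OF R] .
  have gm[measurable]: "gj \<beta> j \<in> borel_measurable U" using gj_meas[OF b] by simp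
  show int: "integrable U (gj \<beta> j)"
    by (rule Uu.integrable_const_bound[where B="real m"]) (auto intro: gj_bound[OF b])
  have "\<bar>Aj \<beta> j\<bar> \<le> (\<integral>y. \<bar>gj \<beta> j y\<bar> \<partial>U)"
    unfolding Aj_def using integral_norm_bound[of U "gj \<beta> j"] by simp
  also have "\<dots> \<le> (\<integral>y. real m \<partial>U)"
    using int by (intro integral_mono) (auto intro: gj_bound[OF b])
  also have "\<dots> = real m" using Uu.prob_space by simp
  finally show "\<bar>Aj \<beta> j\<bar> \<le> real m" .
qed

lemma Gf_sum:
  assumes L: "a * lam * pi * R\<^sup>2 \<ge> 0" and b: "\<beta> > 0"
  shows "(\<Sum>j. pp (a * lam * pi * R\<^sup>2) j * gj \<beta> j y) = Gf a lam \<beta> (uav_dist c h y)"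
proof -
  let ?\<Lambda> = "a * lam * pi * R\<^sup>2" and ?s = "sf \<beta> y"
  have s: "?s > 0" by (rule sf_pos[OF b])
  have sm: "summable (\<lambda>j. ?s ^ k / fact k * (pp ?\<Lambda> j * Fk {..<j} k ?s))" for k
    by (intro summable_mult S_props(1)[OF L s])
  have "(\<Sum>j. pp ?\<Lambda> j * gj \<beta> j y) = (\<Sum>j. \<Sum>k<m. ?s ^ k / fact k * (pp ?\<Lambda> j * Fk {..<j} k ?s))"
    unfolding gj_def by (simp only: sum_distrib_left mult.left_commute)
  also have "\<dots> = (\<Sum>k<m. \<Sum>j. ?s ^ k / fact k * (pp ?\<Lambda> j * Fk {..<j} k ?s))"
    by (rule suminf_sum) (rule sm)
  also have "\<dots> = (\<Sum>k<m. ?s ^ k / fact k * S ?\<Lambda> k ?s)"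
    unfolding S_def by (intro sum.cong refl) (rule suminf_mult[OF S_props(1)[OF L s]])
  also have "\<dots> = Gf a lam \<beta> (uav_dist c h y)"
    unfolding Gf_def
  proof (intro sum.cong refl)
    fix k
    have dk: "(deriv ^^ k) (laplace_I a lam h d \<eta> m P \<sigma>2) ?s = (-1) ^ k * S ?\<Lambda> k ?s"
      by (rule deriv_lapI[OF L s])
    have S_eq: "S ?\<Lambda> k ?s = (-1) ^ k * (deriv ^^ k) (laplace_I a lam h d \<eta> m P \<sigma>2) ?s"
    proof -
      have "(-1::real) ^ k * (-1) ^ k = 1" by (simp add: power_mult_distrib[symmetric])
      then show ?thesis unfolding dk by (simp only: mult.assoc[symmetric] mult_1)
    qed
    have ms: "- real m * \<beta> * uav_dist c h y powr \<eta> = (-1) * ?s" by (simp add: sf_def)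
    have arg: "real m * \<beta> * uav_dist c h y powr \<eta> = ?s" by (simp add: sf_def)
    show "?s ^ k / fact k * S ?\<Lambda> k ?s =
        (- real m * \<beta> * uav_dist c h y powr \<eta>) ^ k / fact k *
        (deriv ^^ k) (laplace_I a lam h d \<eta> m P \<sigma>2) (real m * \<beta> * uav_dist c h y powr \<eta>)"
      unfolding ms arg S_eq power_mult_distrib by (simp only: mult_ac times_divide_eq_left times_divide_eq_right)
  qed
  finally show ?thesis .
qed

end



context sysm begin

lemma part3:
  assumes b: "\<beta> > 0" and a: "a > 0" and lam: "lam > 0"
  shows "ppp_expect a lam c R m (\<lambda>n \<omega>. real (card {i. i < n \<and> \<beta> \<le> sinr c h \<eta> P \<sigma>2 n \<omega> i}))
       = 2 * a * pi * lam * integral {h..d} (\<lambda>r. Gf a lam \<beta> r * r)"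
proof -
  define \<Lambda> where "\<Lambda> = a * lam * pi * R\<^sup>2"
  have L: "\<Lambda> \<ge> 0" using a lam unfolding \<Lambda>_def by simp
  have L': "a * lam * pi * R\<^sup>2 \<ge> 0" using L unfolding \<Lambda>_def .
  interpret Uu: prob_space U using prob_space_disk[OF R] .
  define T where "T = (\<Sum>j. pp \<Lambda> j * Aj \<beta> j)"
  have e1: "ppp_expect a lam c R m (\<lambda>n \<omega>. real (card {i. i < n \<and> \<beta> \<le> sinr c h \<eta> P \<sigma>2 n \<omega> i}))
      = (\<Sum>n. pp \<Lambda> n * (real n * Aj \<beta> (n - 1)))"
    unfolding ppp_expect_def Let_def En[OF b] pp_def \<Lambda>_def ..
  have smA: "summable (\<lambda>j. pp \<Lambda> j * Aj \<beta> j)"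
  proof (rule summable_comparison_test[OF _ summable_mult2[OF pp_summable[OF L], of "real m"]])
    show "\<exists>N. \<forall>n\<ge>N. norm (pp \<Lambda> n * Aj \<beta> n) \<le> \<bar>pp \<Lambda> n\<bar> * real m"
      using Aj_bound(1)[OF b] by (auto simp: abs_mult intro!: mult_left_mono)
  qed
  have e2: "(\<lambda>n. pp \<Lambda> n * (real n * Aj \<beta> (n - 1))) sums (\<Lambda> * T)"
  proof -
    have "(\<lambda>j. \<Lambda> * (pp \<Lambda> j * Aj \<beta> j)) sums (\<Lambda> * T)"
      unfolding T_def by (intro sums_mult summable_sums smA)
    moreover have eqj: "pp \<Lambda> (Suc j) * (real (Suc j) * Aj \<beta> (Suc j - 1)) = \<Lambda> * (pp \<Lambda> j * Aj \<beta> j)" for j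
    proof -
      have f: "(fact (Suc j)::real) = real (Suc j) * fact j" by (simp del: of_nat_Suc)
      have nz: "real (Suc j) \<noteq> 0" by (simp del: of_nat_Suc)
      show ?thesis unfolding pp_def f using nz by (simp add: field_simps del: of_nat_Suc)
    qed
    moreover have "(\<lambda>j. pp \<Lambda> (Suc j) * (real (Suc j) * Aj \<beta> (Suc j - 1))) = (\<lambda>j. \<Lambda> * (pp \<Lambda> j * Aj \<beta> j))"
      by (rule ext, rule eqj)
    ultimately have "(\<lambda>j. pp \<Lambda> (Suc j) * (real (Suc j) * Aj \<beta> (Suc j - 1))) sums (\<Lambda> * T)" by (simp only:)
    then show ?thesis by (subst (asm) sums_Suc_iff) simp
  qed
  have e3: "T = (\<integral>y. Gf a lam \<beta> (uav_dist c h y) \<partial>U)"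
  proof -
    have int: "integrable U (\<lambda>y. pp \<Lambda> j * gj \<beta> j y)" for j
      using Aj_bound(2)[OF b] by simp
    have sumAE: "AE y in U. summable (\<lambda>j. norm (pp \<Lambda> j * gj \<beta> j y))"
    proof (rule AE_I2)
      fix y
      show "summable (\<lambda>j. norm (pp \<Lambda> j * gj \<beta> j y))"
      proof (rule summable_comparison_test[OF _ summable_mult2[OF pp_summable[OF L], of "real m"]])
        show "\<exists>N. \<forall>n\<ge>N. norm (norm (pp \<Lambda> n * gj \<beta> n y)) \<le> \<bar>pp \<Lambda> n\<bar> * real m"
        proof (intro exI allI impI)
          fix n :: nat
          show "norm (norm (pp \<Lambda> n * gj \<beta> n y)) \<le> \<bar>pp \<Lambda> n\<bar> * real m"
            using gj_bound[OF b, of n y] by (simp add: abs_mult mult_left_mono)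
        qed
      qed
    qed
    have sumI: "summable (\<lambda>j. \<integral>y. norm (pp \<Lambda> j * gj \<beta> j y) \<partial>U)"
    proof (rule summable_comparison_test[OF _ summable_mult2[OF pp_summable[OF L], of "real m"]])
      have "norm (\<integral>y. norm (pp \<Lambda> n * gj \<beta> n y) \<partial>U) \<le> \<bar>pp \<Lambda> n\<bar> * real m" for n
      proof -
        have "(\<integral>y. norm (pp \<Lambda> n * gj \<beta> n y) \<partial>U) \<le> (\<integral>y. \<bar>pp \<Lambda> n\<bar> * real m \<partial>U)"
          using int[of n] by (intro integral_mono) (auto simp: abs_mult intro!: mult_left_mono gj_bound[OF b])
        also have "\<dots> = \<bar>pp \<Lambda> n\<bar> * real m" using Uu.prob_space by simp
        finally show ?thesis by simp
      qed
      then show "\<exists>N. \<forall>n\<ge>N. norm (\<integral>y. norm (pp \<Lambda> n * gj \<beta> n y) \<partial>U) \<le> \<bar>pp \<Lambda> n\<bar> * real m" by blast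
    qed
    have "(\<integral>y. (\<Sum>j. pp \<Lambda> j * gj \<beta> j y) \<partial>U) = (\<Sum>j. \<integral>y. pp \<Lambda> j * gj \<beta> j y \<partial>U)"
      by (rule integral_suminf[OF int sumAE sumI])
    also have "\<dots> = T" unfolding T_def Aj_def by simp
    finally have "T = (\<integral>y. (\<Sum>j. pp \<Lambda> j * gj \<beta> j y) \<partial>U)" by simp
    also have "\<dots> = (\<integral>y. Gf a lam \<beta> (uav_dist c h y) \<partial>U)"
      unfolding \<Lambda>_def by (intro Bochner_Integration.integral_cong refl Gf_sum[OF L' b])
    finally show ?thesis .
  qed
  have e4: "(\<integral>y. Gf a lam \<beta> (uav_dist c h y) \<partial>U) = integral {h..d} (\<lambda>r. 2*r/R\<^sup>2 * Gf a lam \<beta> r)"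
  proof (rule disk_integral[OF R h dd])
    have sub: "{h..d} \<subseteq> {0<..}" using h by auto
    show "continuous_on {h..d} (Gf a lam \<beta>)"
      by (rule continuous_on_subset[OF Gf_cont[OF L' b] sub])
    have img: "uav_dist c h ` UNIV \<subseteq> {0<..}" using uav_dist_pos[OF h] by (simp add: image_subset_iff)
    have "continuous_on UNIV (\<lambda>y. Gf a lam \<beta> (uav_dist c h y))"
      by (rule continuous_on_compose2[OF Gf_cont[OF L' b] uav_cont img])
    then show "(\<lambda>y. Gf a lam \<beta> (uav_dist c h y)) \<in> borel_measurable borel"
      by (rule borel_measurable_continuous_onI)
  qed
  have e5: "integral {h..d} (\<lambda>r. 2*r/R\<^sup>2 * Gf a lam \<beta> r) = (2/R\<^sup>2) * integral {h..d} (\<lambda>r. Gf a lam \<beta> r * r)"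
  proof -
    have "integral {h..d} (\<lambda>r. 2*r/R\<^sup>2 * Gf a lam \<beta> r) = integral {h..d} (\<lambda>r. (2/R\<^sup>2) *\<^sub>R (Gf a lam \<beta> r * r))"
      by (intro integral_cong) (simp add: field_simps)
    then show ?thesis by simp
  qed
  have "ppp_expect a lam c R m (\<lambda>n \<omega>. real (card {i. i < n \<and> \<beta> \<le> sinr c h \<eta> P \<sigma>2 n \<omega> i})) = \<Lambda> * T"
    unfolding e1 using e2 by (simp add: sums_iff)
  also have "\<dots> = 2 * a * pi * lam * integral {h..d} (\<lambda>r. Gf a lam \<beta> r * r)"
    unfolding e3 e4 e5 \<Lambda>_def using R by (simp add: field_simps)
  finally show ?thesis .
qed

end



theorem theorem1:
  fixes lam a h R d \<eta> P \<sigma>2 \<beta> :: real and m :: nat and c :: "real \<times> real"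
  assumes "lam > 0" and "0 < a" and "a \<le> 1" and "h > 0" and "R > 0"
    and "d = sqrt (h\<^sup>2 + R\<^sup>2)" and "P > 0" and "\<sigma>2 > 0" and "\<eta> > 2"
    and "m \<ge> 1" and "\<beta> \<ge> 1"
  shows
    "(\<forall>s\<ge>0. ppp_expect a lam c R m
        (\<lambda>n \<omega>. exp (- s * ((\<Sum>i<n. snd (\<omega> i) * uav_dist c h (fst (\<omega> i)) powr (- \<eta>)) + \<sigma>2 / P)))
      = laplace_I a lam h d \<eta> m P \<sigma>2 s)
     \<and> ppp_prob a lam c R m (\<lambda>n \<omega>. \<exists>i<n. sinr c h \<eta> P \<sigma>2 n \<omega> i \<ge> \<beta>)
       = ppp_expect a lam c R m (\<lambda>n \<omega>. real (card {i. i < n \<and> sinr c h \<eta> P \<sigma>2 n \<omega> i \<ge> \<beta>}))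
     \<and> ppp_expect a lam c R m (\<lambda>n \<omega>. real (card {i. i < n \<and> sinr c h \<eta> P \<sigma>2 n \<omega> i \<ge> \<beta>}))
       = 2 * a * pi * lam *
         integral {h..d} (\<lambda>r. (\<Sum>k<m. (- real m * \<beta> * r powr \<eta>) ^ k / fact k *
              (deriv ^^ k) (laplace_I a lam h d \<eta> m P \<sigma>2) (real m * \<beta> * r powr \<eta>)) * r)"
proof -
  interpret sysm c R h \<eta> P \<sigma>2 d m
    using assms by unfold_locales auto
  have b1: "\<beta> \<ge> 1" and bp: "\<beta> > 0" using assms by auto
  have p1: "\<forall>s\<ge>0. ppp_expect a lam c R m
        (\<lambda>n \<omega>. exp (- s * ((\<Sum>i<n. snd (\<omega> i) * uav_dist c h (fst (\<omega> i)) powr (- \<eta>)) + \<sigma>2 / P)))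
      = laplace_I a lam h d \<eta> m P \<sigma>2 s"
    using part1_expect by blast
  have p2: "ppp_prob a lam c R m (\<lambda>n \<omega>. \<exists>i<n. sinr c h \<eta> P \<sigma>2 n \<omega> i \<ge> \<beta>)
       = ppp_expect a lam c R m (\<lambda>n \<omega>. real (card {i. i < n \<and> sinr c h \<eta> P \<sigma>2 n \<omega> i \<ge> \<beta>}))"
    unfolding ppp_prob_def ppp_expect_def Let_def by (simp only: part2_term[OF b1])
  have p3: "ppp_expect a lam c R m (\<lambda>n \<omega>. real (card {i. i < n \<and> sinr c h \<eta> P \<sigma>2 n \<omega> i \<ge> \<beta>}))
       = 2 * a * pi * lam *
         integral {h..d} (\<lambda>r. (\<Sum>k<m. (- real m * \<beta> * r powr \<eta>) ^ k / fact k *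
              (deriv ^^ k) (laplace_I a lam h d \<eta> m P \<sigma>2) (real m * \<beta> * r powr \<eta>)) * r)"
    using part3[OF bp, of a lam] assms unfolding Gf_def by simp
  show ?thesis using p1 p2 p3 by blast
qed

end
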